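(* Let $I$ be an instance of SPA-S (defined in the context), and let $\mathcal{M}$ be the set of all stable matchings of $I$, partially ordered by the student-oriented dominance relation $\preceq$. Then $(\mathcal{M},\preceq)$ is a distributive lattice. For $M,M'\in\mathcal{M}$, the meet of $M$ and $M'$ is the assignment $M\land M'$ and the join is the assignment $M\lor M'$, where $M\land M'$ and $M\lor M'$ are defined in the context; in particular both are stable matchings of $I$.
   Context: An instance $I$ of SPA-S consists of a finite set $\mathcal{S}$ of students, a finite set $\mathcal{P}$ of projects and a finite set $\mathcal{L}$ of lecturers. Each student $s_i$ ranks a subset $A_i\subseteq\mathcal{P}$ (its acceptable projects) in strict order. Each project is offered by exactly one lecturer; lecturer $l_k$ offers a nonempty set $P_k\subseteq\mathcal{P}$, and the sets $P_k$ partition $\mathcal{P}$. Each lecturer $l_k$ ranks in strict order the students who find at least one project of $P_k$ acceptable. Each project $p_j$ has capacity $c_j\in\mathbb{Z}^+$ and each lecturer $l_k$ has capacity $d_k\in\mathbb{Z}^+$ with $\max\{c_j:p_j\in P_k\}\le d_k\le\sum\{c_j:p_j\in P_k\}$. A pair $(s_i,p_j)$ with $p_j$ offered by $l_k$ is acceptable if $p_j\in A_i$ and $s_i$ is on $l_k$'s list. A matching $M$ is a set of acceptable pairs such that each student is in at most one pair, $|M(p_j)|\le c_j$ for each project and $|M(l_k)|\le d_k$ for each lecturer, where $M(s_i)$ is the project of $s_i$, $M(p_j)$ is the set of students assigned to $p_j$, and $M(l_k)$ is the set of students assigned to projects in $P_k$. A project (lecturer) is undersubscribed/full in $M$ if the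 number of its assigned students is less than/equal to its capacity. An acceptable pair $(s_i,p_j)\notin M$, with $p_j$ offered by $l_k$, blocks $M$ if ($s_i$ is unassigned in $M$ or $s_i$ prefers $p_j$ to $M(s_i)$) and one of the following holds: (P1) $p_j$ and $l_k$ are both undersubscribed in $M$; (P2) $p_j$ is undersubscribed, $l_k$ is full and $s_i\in M(l_k)$; (P3) $p_j$ is undersubscribed, $l_k$ is full and $l_k$ prefers $s_i$ to the worst student in $M(l_k)$; (P4) $p_j$ is full and $l_k$ prefers $s_i$ to the worst student in $M(p_j)$. $M$ is stable if no pair blocks it. A student $s_i$ prefers $M$ to $M'$ if $s_i$ is assigned in both and prefers $M(s_i)$ to $M'(s_i)$; $s_i$ is indifferent if unassigned in both or $M(s_i)=M'(s_i)$. For stable $M,M'$, $M\preceq M'$ means every student prefers $M$ to $M'$ or is indifferent between them. For stable matchings $M,M'$, $M\land M'$ assigns each student unassigned in both to nothing, each student assigned to the same project in both to that project, and every other student to the better (in her preference) of her projects in $M$ and $M'$; $M\lor M'$ is defined identically but with the worse of the two projects. *)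

theory Defs
  imports Main
begin

text \<open>An SPA-S instance. (p,q) \<in> spref I s means student s prefers p to q;
 (s,t) \<in> lpref I l means lecturer l prefers s to t.\<close>
record ('s,'p,'l) spa =
  students  :: "'s set"
  projects  :: "'p set"
  lecturers :: "'l set"
  acc       :: "'s \<Rightarrow> 'p set"
  spref     :: "'s \<Rightarrow> ('p \<times> 'p) set"
  lec       :: "'p \<Rightarrow> 'l"
  lpref     :: "'l \<Rightarrow> ('s \<times> 's) set"
  pcap      :: "'p \<Rightarrow> nat"
  lcap      :: "'l \<Rightarrow> nat"

definition offered :: "('s,'p,'l) spa \<Rightarrow> 'l \<Rightarrow> 'p set" where
  "offered I l = {p \<in> projects I. lec I p = l}"

definition llist :: "('s,'p,'l) spa \<Rightarrow> 'l \<Rightarrow> 's set" where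
  "llist I l = {s \<in> students I. acc I s \<inter> offered I l \<noteq> {}}"

definition spa_instance :: "('s,'p,'l) spa \<Rightarrow> bool" where
  "spa_instance I \<longleftrightarrow>
     finite (students I) \<and> finite (projects I) \<and> finite (lecturers I) \<and>
     (\<forall>s\<in>students I. acc I s \<subseteq> projects I \<and>
        strict_linear_order_on (acc I s) (spref I s) \<and>
        spref I s \<subseteq> acc I s \<times> acc I s) \<and>
     (\<forall>p\<in>projects I. lec I p \<in> lecturers I \<and> pcap I p > 0 \<and> pcap I p \<le> lcap I (lec I p)) \<and>
     (\<forall>l\<in>lecturers I. offered I l \<noteq> {} \<and>
        lcap I l > 0 \<and> lcap I l \<le> (\<Sum>p\<in>offered I l. pcap I p) \<and>
        strict_linear_order_on (llist I l) (lpref I l) \<and>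
        lpref I l \<subseteq> llist I l \<times> llist I l)"

definition acceptable :: "('s,'p,'l) spa \<Rightarrow> 's \<Rightarrow> 'p \<Rightarrow> bool" where
  "acceptable I s p \<longleftrightarrow> s \<in> students I \<and> p \<in> projects I \<and> p \<in> acc I s \<and> s \<in> llist I (lec I p)"

definition assigned_p :: "('s \<times> 'p) set \<Rightarrow> 'p \<Rightarrow> 's set" where
  "assigned_p M p = {s. (s,p) \<in> M}"

definition assigned_l :: "('s,'p,'l) spa \<Rightarrow> ('s \<times> 'p) set \<Rightarrow> 'l \<Rightarrow> 's set" where
  "assigned_l I M l = {s. \<exists>p. (s,p) \<in> M \<and> lec I p = l}"

definition is_matching :: "('s,'p,'l) spa \<Rightarrow> ('s \<times> 'p) set \<Rightarrow> bool" where
  "is_matching I M \<longleftrightarrow>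
     (\<forall>(s,p)\<in>M. acceptable I s p) \<and>
     (\<forall>s p q. (s,p) \<in> M \<longrightarrow> (s,q) \<in> M \<longrightarrow> p = q) \<and>
     (\<forall>p\<in>projects I. card (assigned_p M p) \<le> pcap I p) \<and>
     (\<forall>l\<in>lecturers I. card (assigned_l I M l) \<le> lcap I l)"

definition is_assigned :: "('s \<times> 'p) set \<Rightarrow> 's \<Rightarrow> bool" where
  "is_assigned M s \<longleftrightarrow> (\<exists>p. (s,p) \<in> M)"

text \<open>The worst student of X w.r.t. strict preference r (r relates better to worse).\<close>
definition worst :: "('a \<times> 'a) set \<Rightarrow> 'a set \<Rightarrow> 'a" where
  "worst r X = (THE w. w \<in> X \<and> (\<forall>x\<in>X. x \<noteq> w \<longrightarrow> (x,w) \<in> r))"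

definition blocks :: "('s,'p,'l) spa \<Rightarrow> ('s \<times> 'p) set \<Rightarrow> 's \<Rightarrow> 'p \<Rightarrow> bool" where
  "blocks I M s p \<longleftrightarrow>
     (let l = lec I p; Mp = assigned_p M p; Ml = assigned_l I M l;
          p_under = card Mp < pcap I p; p_full = card Mp = pcap I p;
          l_under = card Ml < lcap I l; l_full = card Ml = lcap I l in
     acceptable I s p \<and> (s,p) \<notin> M \<and>
     (\<not> is_assigned M s \<or> (\<exists>q. (s,q) \<in> M \<and> (p,q) \<in> spref I s)) \<and>
     ((p_under \<and> l_under) \<or>
      (p_under \<and> l_full \<and> s \<in> Ml) \<or>
      (p_under \<and> l_full \<and> (s, worst (lpref I l) Ml) \<in> lpref I l) \<or>
      (p_full \<and> (s, worst (lpref I l) Mp) \<in> lpref I l)))"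

definition stable :: "('s,'p,'l) spa \<Rightarrow> ('s \<times> 'p) set \<Rightarrow> bool" where
  "stable I M \<longleftrightarrow> is_matching I M \<and> (\<forall>s p. \<not> blocks I M s p)"

definition sprefers :: "('s,'p,'l) spa \<Rightarrow> 's \<Rightarrow> ('s \<times> 'p) set \<Rightarrow> ('s \<times> 'p) set \<Rightarrow> bool" where
  "sprefers I s M M' \<longleftrightarrow> (\<exists>p q. (s,p) \<in> M \<and> (s,q) \<in> M' \<and> (p,q) \<in> spref I s)"

definition sindiff :: "'s \<Rightarrow> ('s \<times> 'p) set \<Rightarrow> ('s \<times> 'p) set \<Rightarrow> bool" where
  "sindiff s M M' \<longleftrightarrow> (\<not> is_assigned M s \<and> \<not> is_assigned M' s) \<or>
                       (\<exists>p. (s,p) \<in> M \<and> (s,p) \<in> M')"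

definition dominates :: "('s,'p,'l) spa \<Rightarrow> ('s \<times> 'p) set \<Rightarrow> ('s \<times> 'p) set \<Rightarrow> bool" where
  "dominates I M M' \<longleftrightarrow> (\<forall>s\<in>students I. sprefers I s M M' \<or> sindiff s M M')"

text \<open>Meet / join: students with the same assignment keep it; students assigned in both
 to different projects get the better (meet) / worse (join) one; students assigned in
 only one of M, M' (a case that does not arise for stable matchings) are left unassigned.\<close>
definition meet :: "('s,'p,'l) spa \<Rightarrow> ('s \<times> 'p) set \<Rightarrow> ('s \<times> 'p) set \<Rightarrow> ('s \<times> 'p) set" where
  "meet I M M' = (M \<inter> M') \<union>
     {(s,p). \<exists>q. p \<noteq> q \<and> (p,q) \<in> spref I s \<and>
                ((s,p) \<in> M \<and> (s,q) \<in> M' \<or> (s,p) \<in> M' \<and> (s,q) \<in> M)}"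

definition join :: "('s,'p,'l) spa \<Rightarrow> ('s \<times> 'p) set \<Rightarrow> ('s \<times> 'p) set \<Rightarrow> ('s \<times> 'p) set" where
  "join I M M' = (M \<inter> M') \<union>
     {(s,p). \<exists>q. p \<noteq> q \<and> (q,p) \<in> spref I s \<and>
                ((s,p) \<in> M \<and> (s,q) \<in> M' \<or> (s,p) \<in> M' \<and> (s,q) \<in> M)}"

end

theory Submission
  imports Defs
begin

definition better_in :: "('s,'p,'l) spa \<Rightarrow> ('s \<times> 'p) set \<Rightarrow> ('s \<times> 'p) set \<Rightarrow> 's \<Rightarrow> bool" where
  "better_in I M M' s \<longleftrightarrow> is_assigned M s \<and> (\<not> is_assigned M' s \<or> (\<exists>p q. (s,p) \<in> M \<and> (s,q) \<in> M' \<and> (p,q) \<in> spref I s))"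

definition XP :: "('s,'p,'l) spa \<Rightarrow> ('s \<times> 'p) set \<Rightarrow> ('s \<times> 'p) set \<Rightarrow> ('s \<times> 'p) set \<Rightarrow> 'p \<Rightarrow> 's set" where
  "XP I M1 M2 M3 p = {s \<in> assigned_p M1 p. better_in I M2 M3 s}"

definition XL :: "('s,'p,'l) spa \<Rightarrow> ('s \<times> 'p) set \<Rightarrow> ('s \<times> 'p) set \<Rightarrow> ('s \<times> 'p) set \<Rightarrow> 'l \<Rightarrow> 's set" where
  "XL I M1 M2 M3 l = {s \<in> assigned_l I M1 l. better_in I M2 M3 s}"

definition IL :: "('s,'p,'l) spa \<Rightarrow> ('s \<times> 'p) set \<Rightarrow> ('s \<times> 'p) set \<Rightarrow> 'l \<Rightarrow> 's set" where
  "IL I M M' l = {s. \<exists>p. (s,p) \<in> M \<and> (s,p) \<in> M' \<and> lec I p = l}"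

definition TA :: "('s,'p,'l) spa \<Rightarrow> ('s \<times> 'p) set \<Rightarrow> ('s \<times> 'p) set \<Rightarrow> 'l \<Rightarrow> bool" where
  "TA I M M' l \<longleftrightarrow> (\<exists>u p. (u,p) \<in> M \<and> lec I p = l \<and> better_in I M M' u \<and> card (assigned_p M' p) < pcap I p)"

definition EA :: "('s,'p,'l) spa \<Rightarrow> ('s \<times> 'p) set \<Rightarrow> ('s \<times> 'p) set \<Rightarrow> 'l \<Rightarrow> bool" where
  "EA I M M' l \<longleftrightarrow> (\<forall>p \<in> offered I l. card (XP I M M M' p) = card (XP I M' M M' p))"

lemma IL_sym: "IL I M M' l = IL I M' M l"
  unfolding IL_def by blast

lemma meet_sym: "meet I M M' = meet I M' M"
  unfolding meet_def by blast

lemma join_sym: "join I M M' = join I M' M"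
  unfolding join_def by blast

locale spa_loc =
  fixes I :: "('s,'p,'l) spa"
  assumes inst: "spa_instance I"
begin

lemma fin_students: "finite (students I)"
  using inst unfolding spa_instance_def by blast
lemma fin_projects: "finite (projects I)"
  using inst unfolding spa_instance_def by blast

lemma sp_props:
  assumes "s \<in> students I"
  shows "trans (spref I s)" "irrefl (spref I s)" "total_on (acc I s) (spref I s)"
  using inst assms unfolding spa_instance_def strict_linear_order_on_def by blast+

lemma sp_trans: "s \<in> students I \<Longrightarrow> (a,b) \<in> spref I s \<Longrightarrow> (b,c) \<in> spref I s \<Longrightarrow> (a,c) \<in> spref I s"
  using sp_props(1) transD by metis
lemma sp_irrefl: "s \<in> students I \<Longrightarrow> (a,a) \<notin> spref I s"
  using sp_props(2) irreflD by metis
lemma sp_asym: "s \<in> students I \<Longrightarrow> (a,b) \<in> spref I s \<Longrightarrow> (b,a) \<notin> spref I s"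
  using sp_trans sp_irrefl by metis
lemma sp_total: "s \<in> students I \<Longrightarrow> a \<in> acc I s \<Longrightarrow> b \<in> acc I s \<Longrightarrow> a \<noteq> b \<Longrightarrow> (a,b) \<in> spref I s \<or> (b,a) \<in> spref I s"
  using sp_props(3) unfolding total_on_def by blast

lemma lp_props:
  assumes "l \<in> lecturers I"
  shows "trans (lpref I l)" "irrefl (lpref I l)" "total_on (llist I l) (lpref I l)"
        "lcap I l > 0"
  using inst assms unfolding spa_instance_def strict_linear_order_on_def by blast+

lemma lp_trans: "l \<in> lecturers I \<Longrightarrow> (a,b) \<in> lpref I l \<Longrightarrow> (b,c) \<in> lpref I l \<Longrightarrow> (a,c) \<in> lpref I l"
  using lp_props(1) transD by metis
lemma lp_irrefl: "l \<in> lecturers I \<Longrightarrow> (a,a) \<notin> lpref I l"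
  using lp_props(2) irreflD by metis
lemma lp_asym: "l \<in> lecturers I \<Longrightarrow> (a,b) \<in> lpref I l \<Longrightarrow> (b,a) \<notin> lpref I l"
  using lp_trans lp_irrefl by metis
lemma lp_total: "l \<in> lecturers I \<Longrightarrow> a \<in> llist I l \<Longrightarrow> b \<in> llist I l \<Longrightarrow> a \<noteq> b \<Longrightarrow> (a,b) \<in> lpref I l \<or> (b,a) \<in> lpref I l"
  using lp_props(3) unfolding total_on_def by blast

lemma acceptableD:
  assumes "acceptable I s p"
  shows "s \<in> students I" "p \<in> projects I" "p \<in> acc I s" "s \<in> llist I (lec I p)"
        "lec I p \<in> lecturers I" "pcap I p > 0" "p \<in> offered I (lec I p)"
proof -
  have a: "s \<in> students I" "p \<in> projects I" "p \<in> acc I s" "s \<in> llist I (lec I p)"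
    using assms unfolding acceptable_def by auto
  have b: "lec I p \<in> lecturers I \<and> pcap I p > 0"
    using inst a(2) unfolding spa_instance_def by blast
  show "s \<in> students I" "p \<in> projects I" "p \<in> acc I s" "s \<in> llist I (lec I p)"
        "lec I p \<in> lecturers I" "pcap I p > 0" "p \<in> offered I (lec I p)"
    using a b unfolding offered_def by auto
qed

lemma matchingD:
  assumes "is_matching I M"
  shows "\<And>s p. (s,p) \<in> M \<Longrightarrow> acceptable I s p"
    "\<And>s p q. (s,p) \<in> M \<Longrightarrow> (s,q) \<in> M \<Longrightarrow> p = q"
    "\<And>p. p \<in> projects I \<Longrightarrow> card (assigned_p M p) \<le> pcap I p"
    "\<And>l. l \<in> lecturers I \<Longrightarrow> card (assigned_l I M l) \<le> lcap I l"
  using assms unfolding is_matching_def by auto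

lemma fin_p: "is_matching I M \<Longrightarrow> finite (assigned_p M p)"
  by (rule finite_subset[OF _ fin_students]) (auto simp: assigned_p_def dest: matchingD(1) acceptableD(1))
lemma fin_l: "is_matching I M \<Longrightarrow> finite (assigned_l I M l)"
  by (rule finite_subset[OF _ fin_students]) (auto simp: assigned_l_def dest: matchingD(1) acceptableD(1))
lemma sub_llist_l: "is_matching I M \<Longrightarrow> assigned_l I M l \<subseteq> llist I l"
  by (auto simp: assigned_l_def dest: matchingD(1) acceptableD(4))
lemma p_sub_l: "assigned_p M p \<subseteq> assigned_l I M (lec I p)"
  by (auto simp: assigned_l_def assigned_p_def)

lemma worst_ex:
  assumes "finite X" "X \<noteq> {}" "X \<subseteq> llist I l" "l \<in> lecturers I"
  shows "\<exists>w\<in>X. \<forall>x\<in>X. x \<noteq> w \<longrightarrow> (x,w) \<in> lpref I l"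
  using assms(1,2,3)
proof (induction X rule: finite_ne_induct)
  case (singleton x) then show ?case by auto
next
  case (insert x F)
  have sub: "F \<subseteq> llist I l" "x \<in> llist I l" using insert.prems by auto
  obtain w where w: "w \<in> F" "\<forall>y\<in>F. y \<noteq> w \<longrightarrow> (y,w) \<in> lpref I l"
    using insert.IH[OF sub(1)] by blast
  have "x \<noteq> w" using insert.hyps(3) w(1) by auto
  then have "(x,w) \<in> lpref I l \<or> (w,x) \<in> lpref I l"
    using lp_total[OF assms(4) sub(2)] sub(1) w(1) by blast
  then show ?case
  proof
    assume "(x,w) \<in> lpref I l" then show ?thesis using w by blast
  next
    assume wx: "(w,x) \<in> lpref I l"
    have "\<forall>y\<in>insert x F. y \<noteq> x \<longrightarrow> (y, x) \<in> lpref I l"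
    proof (intro ballI impI)
      fix y assume "y \<in> insert x F" "y \<noteq> x"
      then have "y \<in> F" by simp
      show "(y,x) \<in> lpref I l"
      proof (cases "y = w")
        case True then show ?thesis using wx by simp
      next
        case False
        then have "(y,w) \<in> lpref I l" using w(2) \<open>y \<in> F\<close> by blast
        then show ?thesis using wx lp_trans[OF assms(4)] by blast
      qed
    qed
    then show ?thesis by blast
  qed
qed

lemma worst_prop:
  assumes "finite X" "X \<noteq> {}" "X \<subseteq> llist I l" "l \<in> lecturers I"
  shows "worst (lpref I l) X \<in> X" "\<And>x. x \<in> X \<Longrightarrow> x \<noteq> worst (lpref I l) X \<Longrightarrow> (x, worst (lpref I l) X) \<in> lpref I l"
proof -
  obtain w where w: "w \<in> X" "\<forall>x\<in>X. x \<noteq> w \<longrightarrow> (x,w) \<in> lpref I l"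
    using worst_ex[OF assms] by blast
  have u: "v = w" if v: "v \<in> X \<and> (\<forall>x\<in>X. x \<noteq> v \<longrightarrow> (x,v) \<in> lpref I l)" for v
  proof (rule ccontr)
    assume "v \<noteq> w"
    then have "(v,w) \<in> lpref I l" "(w,v) \<in> lpref I l" using v w by auto
    then show False using lp_asym[OF assms(4)] by blast
  qed
  have "worst (lpref I l) X = w"
    unfolding worst_def
    apply (rule the_equality)
     apply (rule conjI, rule w(1), rule w(2))
    apply (erule u)
    done
  then show "worst (lpref I l) X \<in> X" "\<And>x. x \<in> X \<Longrightarrow> x \<noteq> worst (lpref I l) X \<Longrightarrow> (x, worst (lpref I l) X) \<in> lpref I l"
    using w by auto
qed

lemma worst_above:
  assumes "finite X" "X \<noteq> {}" "X \<subseteq> llist I l" "l \<in> lecturers I" "t \<in> llist I l" "t \<notin> X"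
    "(t, worst (lpref I l) X) \<notin> lpref I l"
  shows "\<forall>x\<in>X. (x,t) \<in> lpref I l"
proof
  fix x assume x: "x \<in> X"
  define w where "w = worst (lpref I l) X"
  have w: "w \<in> X" using worst_prop(1)[OF assms(1-4)] w_def by simp
  then have "w \<noteq> t" using assms(6) by auto
  moreover have "w \<in> llist I l" using w assms(3) by auto
  ultimately have "(w,t) \<in> lpref I l \<or> (t,w) \<in> lpref I l"
    using lp_total[OF assms(4) _ assms(5)] by blast
  then have wt: "(w,t) \<in> lpref I l" using assms(7) w_def by blast
  show "(x,t) \<in> lpref I l"
  proof (cases "x = w")
    case True then show ?thesis using wt by simp
  next
    case False
    then have "(x,w) \<in> lpref I l" using worst_prop(2)[OF assms(1-4) x] w_def by simp
    then show ?thesis using wt lp_trans[OF assms(4)] by blast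
  qed
qed

end

context spa_loc begin

lemma nonblock:
  assumes st: "stable I M" and ac: "acceptable I t p" and nin: "(t,p) \<notin> M"
    and sc: "\<not> is_assigned M t \<or> (\<exists>q. (t,q) \<in> M \<and> (p,q) \<in> spref I t)"
  shows "\<forall>x\<in>assigned_p M p. (x,t) \<in> lpref I (lec I p)"
    "card (assigned_p M p) = pcap I p \<or> (card (assigned_l I M (lec I p)) = lcap I (lec I p) \<and>
       t \<notin> assigned_l I M (lec I p) \<and> (\<forall>x\<in>assigned_l I M (lec I p). (x,t) \<in> lpref I (lec I p)))"
proof -
  define l where "l = lec I p"
  have mt: "is_matching I M" using st unfolding stable_def by blast
  have nb: "\<not> blocks I M t p" using st unfolding stable_def by blast
  have lL: "l \<in> lecturers I" and pP: "p \<in> projects I" and tl: "t \<in> llist I l" and pc: "pcap I p > 0"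
    using acceptableD[OF ac] l_def by auto
  have lc: "lcap I l > 0" using lp_props(4)[OF lL] .
  have cp: "card (assigned_p M p) \<le> pcap I p" using matchingD(3)[OF mt pP] .
  have cl: "card (assigned_l I M l) \<le> lcap I l" using matchingD(4)[OF mt lL] .
  have tp: "t \<notin> assigned_p M p" using nin by (simp add: assigned_p_def)
  have finp: "finite (assigned_p M p)" using fin_p[OF mt] .
  have finl: "finite (assigned_l I M l)" using fin_l[OF mt] .
  have subl: "assigned_l I M l \<subseteq> llist I l" using sub_llist_l[OF mt] .
  have subp: "assigned_p M p \<subseteq> llist I l" using subl p_sub_l l_def by blast
  have conds: "\<not> ((card (assigned_p M p) < pcap I p \<and> card (assigned_l I M l) < lcap I l) \<or>
      (card (assigned_p M p) < pcap I p \<and> card (assigned_l I M l) = lcap I l \<and> t \<in> assigned_l I M l) \<or>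
      (card (assigned_p M p) < pcap I p \<and> card (assigned_l I M l) = lcap I l \<and> (t, worst (lpref I l) (assigned_l I M l)) \<in> lpref I l) \<or>
      (card (assigned_p M p) = pcap I p \<and> (t, worst (lpref I l) (assigned_p M p)) \<in> lpref I l))"
    using nb ac nin sc unfolding blocks_def Let_def l_def by (simp, blast)
  have "(\<forall>x\<in>assigned_p M p. (x,t) \<in> lpref I l) \<and> (card (assigned_p M p) = pcap I p \<or> (card (assigned_l I M l) = lcap I l \<and>
       t \<notin> assigned_l I M l \<and> (\<forall>x\<in>assigned_l I M l. (x,t) \<in> lpref I l)))"
  proof (cases "card (assigned_p M p) = pcap I p")
    case True
    then have ne: "assigned_p M p \<noteq> {}" using pc by auto
    have "(t, worst (lpref I l) (assigned_p M p)) \<notin> lpref I l" using conds True by auto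
    then have "\<forall>x\<in>assigned_p M p. (x,t) \<in> lpref I l"
      using worst_above[OF finp ne subp lL tl tp] by blast
    then show ?thesis using True by blast
  next
    case False
    then have lt: "card (assigned_p M p) < pcap I p" using cp by auto
    then have full: "card (assigned_l I M l) = lcap I l" using conds cl by auto
    then have ne: "assigned_l I M l \<noteq> {}" using lc by auto
    have tnl: "t \<notin> assigned_l I M l" using conds lt full by auto
    have "(t, worst (lpref I l) (assigned_l I M l)) \<notin> lpref I l" using conds lt full by auto
    then have all: "\<forall>x\<in>assigned_l I M l. (x,t) \<in> lpref I l"
      using worst_above[OF finl ne subl lL tl tnl] by blast
    then have "\<forall>x\<in>assigned_p M p. (x,t) \<in> lpref I l" using p_sub_l l_def by blast
    then show ?thesis using all full tnl by blast
  qed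
  then show "\<forall>x\<in>assigned_p M p. (x,t) \<in> lpref I (lec I p)"
    "card (assigned_p M p) = pcap I p \<or> (card (assigned_l I M (lec I p)) = lcap I (lec I p) \<and>
       t \<notin> assigned_l I M (lec I p) \<and> (\<forall>x\<in>assigned_l I M (lec I p). (x,t) \<in> lpref I (lec I p)))"
    using l_def by auto
qed

lemma blocks_elim:
  assumes mt: "is_matching I N" and bl: "blocks I N s p"
  shows "acceptable I s p" "(s,p) \<notin> N" "\<not> is_assigned N s \<or> (\<exists>q. (s,q) \<in> N \<and> (p,q) \<in> spref I s)"
   "(card (assigned_p N p) < pcap I p \<and> card (assigned_l I N (lec I p)) < lcap I (lec I p)) \<or>
    (card (assigned_p N p) < pcap I p \<and> card (assigned_l I N (lec I p)) = lcap I (lec I p) \<and>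
       (s \<in> assigned_l I N (lec I p) \<or> (\<exists>w\<in>assigned_l I N (lec I p). (s,w) \<in> lpref I (lec I p)))) \<or>
    (card (assigned_p N p) = pcap I p \<and> (\<exists>w\<in>assigned_p N p. (s,w) \<in> lpref I (lec I p)))"
proof -
  define l where "l = lec I p"
  have b: "acceptable I s p \<and> (s,p) \<notin> N \<and> (\<not> is_assigned N s \<or> (\<exists>q. (s,q) \<in> N \<and> (p,q) \<in> spref I s)) \<and>
     ((card (assigned_p N p) < pcap I p \<and> card (assigned_l I N l) < lcap I l) \<or>
      (card (assigned_p N p) < pcap I p \<and> card (assigned_l I N l) = lcap I l \<and> s \<in> assigned_l I N l) \<or>
      (card (assigned_p N p) < pcap I p \<and> card (assigned_l I N l) = lcap I l \<and> (s, worst (lpref I l) (assigned_l I N l)) \<in> lpref I l) \<or>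
      (card (assigned_p N p) = pcap I p \<and> (s, worst (lpref I l) (assigned_p N p)) \<in> lpref I l))"
    using bl unfolding blocks_def Let_def l_def by simp
  then have ac: "acceptable I s p" by blast
  have lL: "l \<in> lecturers I" and pc: "pcap I p > 0"
    using acceptableD[OF ac] l_def by auto
  have lc: "lcap I l > 0" using lp_props(4)[OF lL] .
  have finp: "finite (assigned_p N p)" using fin_p[OF mt] .
  have finl: "finite (assigned_l I N l)" using fin_l[OF mt] .
  have subl: "assigned_l I N l \<subseteq> llist I l" using sub_llist_l[OF mt] .
  have subp: "assigned_p N p \<subseteq> llist I l" using subl p_sub_l l_def by blast
  have "(card (assigned_p N p) < pcap I p \<and> card (assigned_l I N l) < lcap I l) \<or>
    (card (assigned_p N p) < pcap I p \<and> card (assigned_l I N l) = lcap I l \<and>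
       (s \<in> assigned_l I N l \<or> (\<exists>w\<in>assigned_l I N l. (s,w) \<in> lpref I l))) \<or>
    (card (assigned_p N p) = pcap I p \<and> (\<exists>w\<in>assigned_p N p. (s,w) \<in> lpref I l))"
  proof -
    have c3: "(\<exists>w\<in>assigned_l I N l. (s,w) \<in> lpref I l)"
      if "card (assigned_l I N l) = lcap I l" "(s, worst (lpref I l) (assigned_l I N l)) \<in> lpref I l"
    proof -
      have "assigned_l I N l \<noteq> {}" using that lc by auto
      then show ?thesis using worst_prop(1)[OF finl _ subl lL] that(2) by blast
    qed
    have c4: "(\<exists>w\<in>assigned_p N p. (s,w) \<in> lpref I l)"
      if "card (assigned_p N p) = pcap I p" "(s, worst (lpref I l) (assigned_p N p)) \<in> lpref I l"
    proof -
      have "assigned_p N p \<noteq> {}" using that pc by auto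
      then show ?thesis using worst_prop(1)[OF finp _ subp lL] that(2) by blast
    qed
    show ?thesis using b c3 c4 by blast
  qed
  then show "acceptable I s p" "(s,p) \<notin> N" "\<not> is_assigned N s \<or> (\<exists>q. (s,q) \<in> N \<and> (p,q) \<in> spref I s)"
   "(card (assigned_p N p) < pcap I p \<and> card (assigned_l I N (lec I p)) < lcap I (lec I p)) \<or>
    (card (assigned_p N p) < pcap I p \<and> card (assigned_l I N (lec I p)) = lcap I (lec I p) \<and>
       (s \<in> assigned_l I N (lec I p) \<or> (\<exists>w\<in>assigned_l I N (lec I p). (s,w) \<in> lpref I (lec I p)))) \<or>
    (card (assigned_p N p) = pcap I p \<and> (\<exists>w\<in>assigned_p N p. (s,w) \<in> lpref I (lec I p)))"
    using b l_def by auto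
qed

lemma card_l_sum:
  assumes mt: "is_matching I M1"
  shows "card {s \<in> assigned_l I M1 l. P s} = (\<Sum>p\<in>offered I l. card {s \<in> assigned_p M1 p. P s})"
proof -
  have eq: "{s \<in> assigned_l I M1 l. P s} = (\<Union>p\<in>offered I l. {s \<in> assigned_p M1 p. P s})"
  proof (rule set_eqI, rule iffI)
    fix s assume "s \<in> {s \<in> assigned_l I M1 l. P s}"
    then obtain p where "(s,p) \<in> M1" "lec I p = l" "P s" unfolding assigned_l_def by blast
    moreover then have "p \<in> offered I l" using acceptableD(7)[OF matchingD(1)[OF mt]] by metis
    ultimately show "s \<in> (\<Union>p\<in>offered I l. {s \<in> assigned_p M1 p. P s})"
      unfolding assigned_p_def by blast
  next
    fix s assume "s \<in> (\<Union>p\<in>offered I l. {s \<in> assigned_p M1 p. P s})"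
    then show "s \<in> {s \<in> assigned_l I M1 l. P s}"
      unfolding assigned_p_def assigned_l_def offered_def by blast
  qed
  have fo: "finite (offered I l)"
    by (rule finite_subset[OF _ fin_projects]) (auto simp: offered_def)
  have ff: "\<forall>p\<in>offered I l. finite {s \<in> assigned_p M1 p. P s}" using fin_p[OF mt] by auto
  have dj: "\<forall>p\<in>offered I l. \<forall>q\<in>offered I l. p \<noteq> q \<longrightarrow> {s \<in> assigned_p M1 p. P s} \<inter> {s \<in> assigned_p M1 q. P s} = {}"
    using matchingD(2)[OF mt] unfolding assigned_p_def by blast
  show ?thesis unfolding eq using card_UN_disjoint[OF fo ff dj] .
qed

end

locale two = spa_loc +
  fixes M M' :: "('s \<times> 'p) set"
  assumes stM: "stable I M" and stM': "stable I M'"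
begin

lemma swp: "two I M' M"
  using inst stM stM' unfolding two_def two_axioms_def spa_loc_def by blast

lemma mM: "is_matching I M" using stM unfolding stable_def by blast
lemma mM': "is_matching I M'" using stM' unfolding stable_def by blast

lemma accM: "(s,p) \<in> M \<Longrightarrow> acceptable I s p" using matchingD(1)[OF mM] .
lemma accM': "(s,p) \<in> M' \<Longrightarrow> acceptable I s p" using matchingD(1)[OF mM'] .
lemma unM: "(s,p) \<in> M \<Longrightarrow> (s,q) \<in> M \<Longrightarrow> p = q" using matchingD(2)[OF mM] .
lemma unM': "(s,p) \<in> M' \<Longrightarrow> (s,q) \<in> M' \<Longrightarrow> p = q" using matchingD(2)[OF mM'] .

lemma bi_assigned: "better_in I M M' s \<Longrightarrow> is_assigned M s"
  unfolding better_in_def by blast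

lemma bi_excl: "\<not> (better_in I M M' s \<and> better_in I M' M s)"
proof
  assume a: "better_in I M M' s \<and> better_in I M' M s"
  then obtain p q where pq: "(s,p) \<in> M" "(s,q) \<in> M'" "(p,q) \<in> spref I s"
    unfolding better_in_def by blast
  then obtain p' q' where pq': "(s,p') \<in> M'" "(s,q') \<in> M" "(p',q') \<in> spref I s"
    using a unfolding better_in_def is_assigned_def by blast
  have "p' = q" "q' = p" using pq pq' unM unM' by auto
  then show False using pq pq' sp_asym acceptableD(1)[OF accM[OF pq(1)]] by blast
qed

lemma bi_same:
  assumes "(s,p) \<in> M" "(s,p) \<in> M'"
  shows "\<not> better_in I M M' s"
proof
  assume "better_in I M M' s"
  moreover have "is_assigned M' s" using assms(2) unfolding is_assigned_def by blast
  ultimately obtain p0 q0 where pq: "(s,p0) \<in> M" "(s,q0) \<in> M'" "(p0,q0) \<in> spref I s"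
    unfolding better_in_def by blast
  have "p0 = p" using unM pq(1) assms(1) by blast
  moreover have "q0 = p" using unM' pq(2) assms(2) by blast
  ultimately show False using pq(3) sp_irrefl acceptableD(1)[OF accM[OF assms(1)]] by simp
qed

lemma bi_cases:
  assumes "(s,p) \<in> M" "(s,p) \<notin> M'"
  shows "better_in I M M' s \<or> better_in I M' M s"
proof (cases "is_assigned M' s")
  case False then show ?thesis using assms unfolding better_in_def is_assigned_def by blast
next
  case True
  then obtain q where q: "(s,q) \<in> M'" unfolding is_assigned_def by blast
  have "p \<noteq> q" using q assms by auto
  moreover have "p \<in> acc I s" "q \<in> acc I s" "s \<in> students I"
    using acceptableD[OF accM[OF assms(1)]] acceptableD[OF accM'[OF q]] by auto
  ultimately have "(p,q) \<in> spref I s \<or> (q,p) \<in> spref I s" using sp_total by blast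
  then show ?thesis using assms q unfolding better_in_def is_assigned_def by blast
qed

lemma bi_sc:
  assumes "better_in I M M' s" "(s,p) \<in> M"
  shows "(s,p) \<notin> M'" "\<not> is_assigned M' s \<or> (\<exists>q. (s,q) \<in> M' \<and> (p,q) \<in> spref I s)"
proof -
  show "\<not> is_assigned M' s \<or> (\<exists>q. (s,q) \<in> M' \<and> (p,q) \<in> spref I s)"
    using assms unM unfolding better_in_def by blast
  then show "(s,p) \<notin> M'"
    using sp_irrefl acceptableD(1)[OF accM[OF assms(2)]] unM' unfolding is_assigned_def by blast
qed

lemma bi_same': "(s,p) \<in> M \<Longrightarrow> (s,p) \<in> M' \<Longrightarrow> \<not> better_in I M' M s"
  using two.bi_same[OF swp] by blast

lemma part_p_card:
  "card (assigned_p M p) = card (assigned_p M p \<inter> assigned_p M' p) + card (XP I M M M' p) + card (XP I M M' M p)"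
proof -
  define C where "C = assigned_p M p \<inter> assigned_p M' p"
  define X1 where "X1 = XP I M M M' p"
  define X2 where "X2 = XP I M M' M p"
  have eq: "assigned_p M p = C \<union> (X1 \<union> X2)"
  proof (rule set_eqI, rule iffI)
    fix s assume s: "s \<in> assigned_p M p"
    show "s \<in> C \<union> (X1 \<union> X2)"
    proof (cases "(s,p) \<in> M'")
      case True then show ?thesis using s unfolding C_def assigned_p_def by blast
    next
      case False
      have "(s,p) \<in> M" using s unfolding assigned_p_def by blast
      then have "better_in I M M' s \<or> better_in I M' M s" using bi_cases False by blast
      then show ?thesis using s unfolding X1_def X2_def XP_def by blast
    qed
  qed (auto simp: C_def X1_def X2_def XP_def)
  have d1: "C \<inter> (X1 \<union> X2) = {}"
  proof -
    have "s \<notin> X1 \<and> s \<notin> X2" if "s \<in> C" for s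
      using that bi_same bi_same' unfolding C_def X1_def X2_def XP_def assigned_p_def by blast
    then show ?thesis by blast
  qed
  have d2: "X1 \<inter> X2 = {}"
    using bi_excl unfolding X1_def X2_def XP_def by blast
  have f: "finite (assigned_p M p)" using fin_p[OF mM] .
  have f1: "finite X1" "finite X2" "finite C"
    using f unfolding X1_def X2_def XP_def C_def by auto
  have "card (assigned_p M p) = card C + card (X1 \<union> X2)"
    unfolding eq by (rule card_Un_disjoint[OF f1(3) _ d1]) (use f1 in blast)
  also have "card (X1 \<union> X2) = card X1 + card X2"
    using card_Un_disjoint[OF f1(1,2) d2] .
  finally show ?thesis unfolding C_def X1_def X2_def by simp
qed

lemma part_l_card:
  "card (assigned_l I M l) = card (IL I M M' l) + card (XL I M M M' l) + card (XL I M M' M l)"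
proof -
  define C where "C = IL I M M' l"
  define X1 where "X1 = XL I M M M' l"
  define X2 where "X2 = XL I M M' M l"
  have eq: "assigned_l I M l = C \<union> (X1 \<union> X2)"
  proof (rule set_eqI, rule iffI)
    fix s assume s: "s \<in> assigned_l I M l"
    then obtain p where p: "(s,p) \<in> M" "lec I p = l" unfolding assigned_l_def by blast
    show "s \<in> C \<union> (X1 \<union> X2)"
    proof (cases "(s,p) \<in> M'")
      case True then show ?thesis using p unfolding C_def IL_def by blast
    next
      case False
      then have "better_in I M M' s \<or> better_in I M' M s" using bi_cases p by blast
      then show ?thesis using s unfolding X1_def X2_def XL_def by blast
    qed
  next
    fix s assume "s \<in> C \<union> (X1 \<union> X2)"
    then show "s \<in> assigned_l I M l" unfolding C_def X1_def X2_def XL_def IL_def assigned_l_def by blast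
  qed
  have d1: "C \<inter> (X1 \<union> X2) = {}"
  proof -
    have "s \<notin> X1 \<and> s \<notin> X2" if sC: "s \<in> C" for s
    proof -
      obtain p where "(s,p) \<in> M" "(s,p) \<in> M'" using sC unfolding C_def IL_def by blast
      then show ?thesis using bi_same bi_same' unfolding X1_def X2_def XL_def by blast
    qed
    then show ?thesis by blast
  qed
  have d2: "X1 \<inter> X2 = {}"
    using bi_excl unfolding X1_def X2_def XL_def by blast
  have f: "finite (assigned_l I M l)" using fin_l[OF mM] .
  have f1: "finite X1" "finite X2" "finite C"
    using f eq by auto
  have "card (assigned_l I M l) = card C + card (X1 \<union> X2)"
    unfolding eq by (rule card_Un_disjoint[OF f1(3) _ d1]) (use f1 in blast)
  also have "card (X1 \<union> X2) = card X1 + card X2"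
    using card_Un_disjoint[OF f1(1,2) d2] .
  finally show ?thesis unfolding C_def X1_def X2_def by simp
qed

lemma XL_sum: "is_matching I M1 \<Longrightarrow> card (XL I M1 M2 M3 l) = (\<Sum>p\<in>offered I l. card (XP I M1 M2 M3 p))"
  unfolding XL_def XP_def by (rule card_l_sum)

end

context two begin

lemma fin_lecturers: "finite (lecturers I)"
  using inst unfolding spa_instance_def by blast

lemma F_nb:
  assumes u: "u \<in> XP I M M M' p"
  shows "\<forall>x\<in>assigned_p M' p. (x,u) \<in> lpref I (lec I p)"
    "card (assigned_p M' p) = pcap I p \<or> (card (assigned_l I M' (lec I p)) = lcap I (lec I p) \<and>
       u \<notin> assigned_l I M' (lec I p) \<and> (\<forall>x\<in>assigned_l I M' (lec I p). (x,u) \<in> lpref I (lec I p)))"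
proof -
  have uM: "(u,p) \<in> M" and bu: "better_in I M M' u" using u unfolding XP_def assigned_p_def by auto
  have ac: "acceptable I u p" using accM[OF uM] .
  show "\<forall>x\<in>assigned_p M' p. (x,u) \<in> lpref I (lec I p)"
    using nonblock(1)[OF stM' ac bi_sc(1)[OF bu uM] bi_sc(2)[OF bu uM]] .
  show "card (assigned_p M' p) = pcap I p \<or> (card (assigned_l I M' (lec I p)) = lcap I (lec I p) \<and>
       u \<notin> assigned_l I M' (lec I p) \<and> (\<forall>x\<in>assigned_l I M' (lec I p). (x,u) \<in> lpref I (lec I p)))"
    using nonblock(2)[OF stM' ac bi_sc(1)[OF bu uM] bi_sc(2)[OF bu uM]] .
qed

lemma F1b:
  assumes u: "u \<in> assigned_p M p" and t: "t \<in> assigned_p M' p" "t \<notin> assigned_p M p"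
    and tu: "(t,u) \<in> lpref I (lec I p)"
  shows "better_in I M M' t"
proof (rule ccontr)
  assume nb: "\<not> better_in I M M' t"
  have tM': "(t,p) \<in> M'" and tnM: "(t,p) \<notin> M" using t unfolding assigned_p_def by auto
  have ac: "acceptable I t p" using accM'[OF tM'] .
  have sc: "\<not> is_assigned M t \<or> (\<exists>q. (t,q) \<in> M \<and> (p,q) \<in> spref I t)"
  proof (cases "is_assigned M t")
    case True
    then obtain q where q: "(t,q) \<in> M" unfolding is_assigned_def by blast
    have "q \<noteq> p" using q tnM by auto
    moreover have "q \<in> acc I t" "p \<in> acc I t" "t \<in> students I"
      using acceptableD[OF accM[OF q]] acceptableD[OF ac] by auto
    ultimately have "(p,q) \<in> spref I t \<or> (q,p) \<in> spref I t" using sp_total by blast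
    moreover have "(q,p) \<notin> spref I t" using nb q tM' True unfolding better_in_def by blast
    ultimately show ?thesis using q by blast
  qed simp
  have "(u,t) \<in> lpref I (lec I p)" using nonblock(1)[OF stM ac tnM sc] u by blast
  then show False using tu lp_asym acceptableD(5)[OF ac] by blast
qed

lemma C_A:
  assumes u: "u \<in> XP I M M M' p" and full: "card (assigned_p M' p) = pcap I p"
  shows "card (XP I M M M' p) \<le> card (XP I M' M M' p)" "XP I M' M' M p = {}"
proof -
  have uMp: "u \<in> assigned_p M p" using u unfolding XP_def by blast
  have pP: "p \<in> projects I" using uMp accM acceptableD(2) unfolding assigned_p_def by blast
  have all: "\<forall>x\<in>assigned_p M' p. (x,u) \<in> lpref I (lec I p)" using F_nb(1)[OF u] .
  have sub: "assigned_p M' p - assigned_p M p \<subseteq> XP I M' M M' p"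
  proof
    fix t assume t: "t \<in> assigned_p M' p - assigned_p M p"
    then have "(t,u) \<in> lpref I (lec I p)" using all by blast
    then have "better_in I M M' t" using F1b[OF uMp] t by blast
    then show "t \<in> XP I M' M M' p" using t unfolding XP_def by blast
  qed
  have sub2: "XP I M' M' M p \<subseteq> assigned_p M' p - assigned_p M p"
  proof
    fix t assume t: "t \<in> XP I M' M' M p"
    then have "(t,p) \<in> M'" "better_in I M' M t" unfolding XP_def assigned_p_def by auto
    then have "(t,p) \<notin> M" using bi_same' by blast
    then show "t \<in> assigned_p M' p - assigned_p M p" using t unfolding XP_def assigned_p_def by blast
  qed
  show "XP I M' M' M p = {}"
  proof (rule ccontr)
    assume "XP I M' M' M p \<noteq> {}"
    then obtain t where t: "t \<in> XP I M' M' M p" by blast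
    then have "t \<in> XP I M' M M' p" using sub sub2 by blast
    then show False using t bi_excl unfolding XP_def by blast
  qed
  have f': "finite (assigned_p M' p)" using fin_p[OF mM'] .
  have fX: "finite (XP I M' M M' p)" using f' unfolding XP_def by auto
  have cd: "card (assigned_p M' p - assigned_p M p) = card (assigned_p M' p) - card (assigned_p M' p \<inter> assigned_p M p)"
    using card_Diff_subset_Int[OF finite_Int[OF disjI1[OF f']]] .
  have c1: "card (assigned_p M' p - assigned_p M p) \<le> card (XP I M' M M' p)"
    using card_mono[OF fX sub] .
  have c2: "card (assigned_p M p) \<le> pcap I p" using matchingD(3)[OF mM pP] .
  have c3: "card (assigned_p M' p \<inter> assigned_p M p) \<le> card (assigned_p M' p)"
    using card_mono[OF f' Int_lower1] .
  have c4: "card (assigned_p M p \<inter> assigned_p M' p) = card (assigned_p M' p \<inter> assigned_p M p)"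
    by (simp add: Int_commute)
  show "card (XP I M M M' p) \<le> card (XP I M' M M' p)"
    using part_p_card[of p] c1 c2 c3 c4 cd full by linarith
qed

lemma X_excl: "XP I M M M' p = {} \<or> XP I M' M' M p = {}"
proof (rule ccontr)
  assume "\<not> (XP I M M M' p = {} \<or> XP I M' M' M p = {})"
  then obtain u v where u: "u \<in> XP I M M M' p" and v: "v \<in> XP I M' M' M p" by blast
  have ac: "acceptable I u p" using u accM unfolding XP_def assigned_p_def by blast
  have lL: "lec I p \<in> lecturers I" using acceptableD(5)[OF ac] .
  have c1: "card (assigned_p M' p) \<noteq> pcap I p" using C_A(2)[OF u] v by auto
  have c2: "card (assigned_p M p) \<noteq> pcap I p" using two.C_A(2)[OF swp v] u by auto
  from F_nb(2)[OF u] c1 have A: "\<forall>x\<in>assigned_l I M' (lec I p). (x,u) \<in> lpref I (lec I p)" by blast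
  from two.F_nb(2)[OF swp v] c2 have B: "\<forall>x\<in>assigned_l I M (lec I p). (x,v) \<in> lpref I (lec I p)" by blast
  have "v \<in> assigned_l I M' (lec I p)" "u \<in> assigned_l I M (lec I p)" using u v p_sub_l unfolding XP_def by blast+
  then show False using A B lp_asym[OF lL] by blast
qed

lemma proj_le_notTA:
  assumes "\<not> TA I M M' l" "q \<in> offered I l"
  shows "card (XP I M M M' q) \<le> card (XP I M' M M' q)"
proof (cases "XP I M M M' q = {}")
  case True then show ?thesis by simp
next
  case False
  then obtain u where u: "u \<in> XP I M M M' q" by blast
  have lq: "lec I q = l" "q \<in> projects I" using assms(2) unfolding offered_def by auto
  have "card (assigned_p M' q) \<le> pcap I q" using matchingD(3)[OF mM' lq(2)] .
  moreover have "\<not> card (assigned_p M' q) < pcap I q"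
    using assms(1) u lq unfolding TA_def XP_def assigned_p_def by blast
  ultimately have "card (assigned_p M' q) = pcap I q" by simp
  then show ?thesis using C_A(1)[OF u] by blast
qed

lemma TA_full:
  assumes "TA I M M' l"
  shows "card (assigned_l I M' l) = lcap I l" "\<exists>u\<in>assigned_l I M l. \<forall>x\<in>assigned_l I M' l. (x,u) \<in> lpref I l"
proof -
  obtain u p where up: "(u,p) \<in> M" "lec I p = l" "better_in I M M' u" "card (assigned_p M' p) < pcap I p"
    using assms unfolding TA_def by blast
  have u: "u \<in> XP I M M M' p" using up unfolding XP_def assigned_p_def by blast
  from F_nb(2)[OF u] up(4) have h: "card (assigned_l I M' (lec I p)) = lcap I (lec I p) \<and> (\<forall>x\<in>assigned_l I M' (lec I p). (x,u) \<in> lpref I (lec I p))"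
    by auto
  show "card (assigned_l I M' l) = lcap I l" using h up(2) by simp
  have "u \<in> assigned_l I M l" using up unfolding assigned_l_def by blast
  then show "\<exists>u\<in>assigned_l I M l. \<forall>x\<in>assigned_l I M' l. (x,u) \<in> lpref I l" using h up(2) by blast
qed

lemma LA:
  assumes lL: "l \<in> lecturers I"
  shows "card (XL I M M M' l) \<le> card (XL I M' M M' l)"
proof (cases "TA I M M' l")
  case False
  have "(\<Sum>p\<in>offered I l. card (XP I M M M' p)) \<le> (\<Sum>p\<in>offered I l. card (XP I M' M M' p))"
    by (rule sum_mono) (rule proj_le_notTA[OF False])
  then show ?thesis using XL_sum[OF mM] XL_sum[OF mM'] by simp
next
  case True
  obtain u where u: "u \<in> assigned_l I M l" "\<forall>x\<in>assigned_l I M' l. (x,u) \<in> lpref I l"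
    using TA_full(2)[OF True] by blast
  have fl: "card (assigned_l I M' l) = lcap I l" using TA_full(1)[OF True] .
  have pb: "card (XP I M' M' M q) \<le> card (XP I M M' M q)" if q: "q \<in> offered I l" for q
  proof (cases "XP I M' M' M q = {}")
    case True then show ?thesis by simp
  next
    case False
    then obtain v where v: "v \<in> XP I M' M' M q" by blast
    have lq: "lec I q = l" "q \<in> projects I" using q unfolding offered_def by auto
    show ?thesis
    proof (cases "card (assigned_p M q) = pcap I q")
      case True then show ?thesis using two.C_A(1)[OF swp v] by blast
    next
      case False
      then have "\<forall>x\<in>assigned_l I M (lec I q). (x,v) \<in> lpref I (lec I q)" using two.F_nb(2)[OF swp v] by blast
      then have uv: "(u,v) \<in> lpref I l" using u(1) lq by auto
      have "v \<in> assigned_l I M' l" using v lq p_sub_l unfolding XP_def by blast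
      then have "(v,u) \<in> lpref I l" using u(2) by blast
      then show ?thesis using uv lp_asym[OF lL] by blast
    qed
  qed
  have "(\<Sum>p\<in>offered I l. card (XP I M' M' M p)) \<le> (\<Sum>p\<in>offered I l. card (XP I M M' M p))"
    by (rule sum_mono) (rule pb)
  then have b: "card (XL I M' M' M l) \<le> card (XL I M M' M l)"
    using XL_sum[OF mM'] XL_sum[OF mM] by simp
  have c1: "card (assigned_l I M l) \<le> lcap I l" using matchingD(4)[OF mM lL] .
  have p1: "card (assigned_l I M l) = card (IL I M M' l) + card (XL I M M M' l) + card (XL I M M' M l)"
    using part_l_card .
  have p2: "card (assigned_l I M' l) = card (IL I M M' l) + card (XL I M' M' M l) + card (XL I M' M M' l)"
    using two.part_l_card[OF swp] IL_sym by metis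
  show ?thesis using b c1 p1 p2 fl by linarith
qed

lemma R1_aux:
  shows "\<forall>s. better_in I M M' s \<longrightarrow> is_assigned M' s"
    and "\<forall>l\<in>lecturers I. card (XL I M M M' l) = card (XL I M' M M' l)"
proof -
  define SA where "SA = {s. better_in I M M' s}"
  define L where "L = lecturers I"
  have finL: "finite L" using fin_lecturers L_def by simp
  have SAeq: "SA = (\<Union>l\<in>L. XL I M M M' l)"
  proof (rule set_eqI, rule iffI)
    fix s assume "s \<in> SA"
    then have b: "better_in I M M' s" unfolding SA_def by blast
    then obtain p where p: "(s,p) \<in> M" using bi_assigned unfolding is_assigned_def by blast
    then have "lec I p \<in> L" using acceptableD(5)[OF accM[OF p]] L_def by simp
    moreover have "s \<in> XL I M M M' (lec I p)" using p b unfolding XL_def assigned_l_def by blast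
    ultimately show "s \<in> (\<Union>l\<in>L. XL I M M M' l)" by blast
  qed (auto simp: SA_def XL_def)
  have finSA: "finite SA"
  proof (rule finite_subset[OF _ fin_students])
    show "SA \<subseteq> students I"
    proof
      fix s assume "s \<in> SA"
      then obtain p where "(s,p) \<in> M" using bi_assigned unfolding SA_def is_assigned_def by blast
      then show "s \<in> students I" using acceptableD(1)[OF accM] by blast
    qed
  qed
  have f1: "\<forall>l\<in>L. finite (XL I M M M' l)" using fin_l[OF mM] unfolding XL_def by auto
  have f2: "\<forall>l\<in>L. finite (XL I M' M M' l)" using fin_l[OF mM'] unfolding XL_def by auto
  have d0: "XL I M1 M M' l1 \<inter> XL I M1 M M' l2 = {}" if "l1 \<noteq> l2" and u: "\<And>s p q. (s,p) \<in> M1 \<Longrightarrow> (s,q) \<in> M1 \<Longrightarrow> p = q" for l1 l2 M1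
  proof (rule ccontr)
    assume "XL I M1 M M' l1 \<inter> XL I M1 M M' l2 \<noteq> {}"
    then obtain s p1 p2 where "(s,p1) \<in> M1" "lec I p1 = l1" "(s,p2) \<in> M1" "lec I p2 = l2"
      unfolding XL_def assigned_l_def by blast
    then show False using u that(1) by metis
  qed
  have d1: "\<forall>l1\<in>L. \<forall>l2\<in>L. l1 \<noteq> l2 \<longrightarrow> XL I M M M' l1 \<inter> XL I M M M' l2 = {}"
    using d0 unM by blast
  have d2: "\<forall>l1\<in>L. \<forall>l2\<in>L. l1 \<noteq> l2 \<longrightarrow> XL I M' M M' l1 \<inter> XL I M' M M' l2 = {}"
    using d0 unM' by blast
  have cSA: "card SA = (\<Sum>l\<in>L. card (XL I M M M' l))"
    unfolding SAeq using card_UN_disjoint[OF finL f1 d1] .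
  have cU: "card (\<Union>l\<in>L. XL I M' M M' l) = (\<Sum>l\<in>L. card (XL I M' M M' l))"
    using card_UN_disjoint[OF finL f2 d2] .
  have sub: "(\<Union>l\<in>L. XL I M' M M' l) \<subseteq> SA \<inter> {s. is_assigned M' s}"
    unfolding SA_def XL_def assigned_l_def is_assigned_def by blast
  have le: "(\<Sum>l\<in>L. card (XL I M M M' l)) \<le> (\<Sum>l\<in>L. card (XL I M' M M' l))"
    by (rule sum_mono) (rule LA, simp add: L_def)
  have finS2: "finite (SA \<inter> {s. is_assigned M' s})" using finSA by blast
  have le2: "card (\<Union>l\<in>L. XL I M' M M' l) \<le> card (SA \<inter> {s. is_assigned M' s})"
    using card_mono[OF finS2 sub] .
  have le3: "card (SA \<inter> {s. is_assigned M' s}) \<le> card SA"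
    using card_mono[OF finSA] by blast
  have "SA \<inter> {s. is_assigned M' s} = SA"
  proof (rule card_seteq[OF finSA])
    show "SA \<inter> {s. is_assigned M' s} \<subseteq> SA" by blast
    show "card SA \<le> card (SA \<inter> {s. is_assigned M' s})" using cSA cU le le2 by linarith
  qed
  then show "\<forall>s. better_in I M M' s \<longrightarrow> is_assigned M' s" unfolding SA_def by blast
  show "\<forall>l\<in>lecturers I. card (XL I M M M' l) = card (XL I M' M M' l)"
  proof (rule ccontr)
    assume "\<not> (\<forall>l\<in>lecturers I. card (XL I M M M' l) = card (XL I M' M M' l))"
    then obtain l where l: "l \<in> L" "card (XL I M M M' l) \<noteq> card (XL I M' M M' l)" unfolding L_def by blast
    have "card (XL I M M M' l) \<le> card (XL I M' M M' l)" using l(1) LA L_def by simp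
    then have lt: "card (XL I M M M' l) < card (XL I M' M M' l)" using l(2) by simp
    have "(\<Sum>l\<in>L. card (XL I M M M' l)) < (\<Sum>l\<in>L. card (XL I M' M M' l))"
    proof (rule sum_strict_mono_ex1[OF finL])
      show "\<forall>x\<in>L. card (XL I M M M' x) \<le> card (XL I M' M M' x)" using LA L_def by simp
      show "\<exists>a\<in>L. card (XL I M M M' a) < card (XL I M' M M' a)" using lt l(1) by blast
    qed
    then show False using cSA cU le2 le3 by linarith
  qed
qed

lemma R1: "is_assigned M s \<Longrightarrow> is_assigned M' s"
  using R1_aux(1) unfolding better_in_def by blast

lemma R1': "is_assigned M' s \<Longrightarrow> is_assigned M s"
  using two.R1[OF swp] .

lemma LAeq: "l \<in> lecturers I \<Longrightarrow> card (XL I M M M' l) = card (XL I M' M M' l)"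
  using R1_aux(2) by blast

lemma LBeq: "l \<in> lecturers I \<Longrightarrow> card (XL I M M' M l) = card (XL I M' M' M l)"
  using two.LAeq[OF swp] by simp

lemma card_l_eq: "l \<in> lecturers I \<Longrightarrow> card (assigned_l I M l) = card (assigned_l I M' l)"
  using part_l_card[of l] two.part_l_card[OF swp, of l] IL_sym[of I M M' l] LAeq LBeq by simp

lemma bi_iff: "better_in I M M' s \<longleftrightarrow> (\<exists>p q. (s,p) \<in> M \<and> (s,q) \<in> M' \<and> (p,q) \<in> spref I s)"
  using R1 unfolding better_in_def is_assigned_def by blast

end

lemma card3:
  assumes "finite A" "finite B" "finite C" "A \<inter> B = {}" "A \<inter> C = {}" "B \<inter> C = {}"
  shows "card (A \<union> B \<union> C) = card A + card B + card C"
proof -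
  have "card (A \<union> B) = card A + card B" using card_Un_disjoint[OF assms(1,2,4)] .
  moreover have "(A \<union> B) \<inter> C = {}" using assms(5,6) by blast
  ultimately show ?thesis using card_Un_disjoint[of "A \<union> B" C] assms(1,2,3) by simp
qed

context two begin

lemma fin_offered: "finite (offered I l)"
  by (rule finite_subset[OF _ fin_projects]) (auto simp: offered_def)

lemma NA:
  assumes lL: "l \<in> lecturers I" and nt: "\<not> TA I M M' l"
  shows "EA I M M' l"
  unfolding EA_def
proof
  fix q assume q: "q \<in> offered I l"
  show "card (XP I M M M' q) = card (XP I M' M M' q)"
  proof (rule ccontr)
    assume ne: "card (XP I M M M' q) \<noteq> card (XP I M' M M' q)"
    have lt: "card (XP I M M M' q) < card (XP I M' M M' q)" using proj_le_notTA[OF nt q] ne by simp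
    have "(\<Sum>p\<in>offered I l. card (XP I M M M' p)) < (\<Sum>p\<in>offered I l. card (XP I M' M M' p))"
    proof (rule sum_strict_mono_ex1[OF fin_offered])
      show "\<forall>x\<in>offered I l. card (XP I M M M' x) \<le> card (XP I M' M M' x)" using proj_le_notTA[OF nt] by blast
      show "\<exists>a\<in>offered I l. card (XP I M M M' a) < card (XP I M' M M' a)" using lt q by blast
    qed
    then show False using XL_sum[OF mM] XL_sum[OF mM'] LAeq[OF lL] by simp
  qed
qed

lemma TA_lec: "TA I M M' l \<Longrightarrow> l \<in> lecturers I"
  unfolding TA_def using accM acceptableD(5) by metis

lemma TA_excl: "\<not> (TA I M M' l \<and> TA I M' M l)"
proof
  assume a: "TA I M M' l \<and> TA I M' M l"
  have lL: "l \<in> lecturers I" using a TA_lec by blast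
  obtain u where u: "u \<in> assigned_l I M l" "\<forall>x\<in>assigned_l I M' l. (x,u) \<in> lpref I l"
    using TA_full(2) a by blast
  obtain v where v: "v \<in> assigned_l I M' l" "\<forall>x\<in>assigned_l I M l. (x,v) \<in> lpref I l"
    using two.TA_full(2)[OF swp] a by blast
  have "(v,u) \<in> lpref I l" "(u,v) \<in> lpref I l" using u v by auto
  then show False using lp_asym[OF lL] by blast
qed

lemma TA_EB: "l \<in> lecturers I \<Longrightarrow> TA I M M' l \<Longrightarrow> EA I M' M l"
  using two.NA[OF swp] TA_excl by blast

lemma EA_or: "l \<in> lecturers I \<Longrightarrow> EA I M M' l \<or> EA I M' M l"
  using TA_EB NA by blast

lemma nonempty_card: "finite A \<Longrightarrow> x \<in> A \<Longrightarrow> card A = card B \<Longrightarrow> B \<noteq> {}"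
  by auto

lemma fin_XP: "is_matching I M1 \<Longrightarrow> finite (XP I M1 M2 M3 p)"
  unfolding XP_def using fin_p by auto
lemma fin_XL: "is_matching I M1 \<Longrightarrow> finite (XL I M1 M2 M3 l)"
  unfolding XL_def using fin_l by auto

lemma Bdom:
  assumes x: "x \<in> XL I M M' M l"
  shows "\<exists>v\<in>assigned_l I M' l. (x,v) \<in> lpref I l"
proof -
  obtain q where q: "(x,q) \<in> M" "lec I q = l" and bx: "better_in I M' M x"
    using x unfolding XL_def assigned_l_def by blast
  have ac: "acceptable I x q" using accM[OF q(1)] .
  have lL: "l \<in> lecturers I" using acceptableD(5)[OF ac] q(2) by simp
  have qo: "q \<in> offered I l" using acceptableD(7)[OF ac] q(2) by simp
  have xq: "x \<in> XP I M M' M q" using q bx unfolding XP_def assigned_p_def by blast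
  have xl: "x \<in> assigned_l I M l" using q unfolding assigned_l_def by blast
  show ?thesis
  proof (cases "TA I M' M l")
    case True
    obtain v where v: "v \<in> assigned_l I M' l" "\<forall>y\<in>assigned_l I M l. (y,v) \<in> lpref I l"
      using two.TA_full(2)[OF swp True] by blast
    then show ?thesis using xl by blast
  next
    case False
    then have "EA I M' M l" using two.NA[OF swp lL] by blast
    then have ceq: "card (XP I M' M' M q) = card (XP I M M' M q)" using qo unfolding EA_def by blast
    have "XP I M' M' M q \<noteq> {}" by (rule nonempty_card[OF fin_XP[OF mM] xq]) (use ceq in simp)
    then obtain v where v: "v \<in> XP I M' M' M q" by blast
    have "\<forall>y\<in>assigned_p M q. (y,v) \<in> lpref I (lec I q)" using two.F_nb(1)[OF swp v] .
    then have "(x,v) \<in> lpref I l" using xq q(2) unfolding XP_def by blast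
    moreover have "v \<in> assigned_l I M' l" using v q(2) p_sub_l unfolding XP_def by blast
    ultimately show ?thesis by blast
  qed
qed

lemma Adom: "x \<in> XL I M' M M' l \<Longrightarrow> \<exists>u\<in>assigned_l I M l. (x,u) \<in> lpref I l"
  using two.Bdom[OF swp] .

lemma Y_EA:
  assumes EA: "EA I M M' (lec I p)" and pP: "p \<in> projects I"
  shows "XP I M M' M p = {} \<or> XP I M' M M' p = {}"
proof (rule ccontr)
  assume "\<not> (XP I M M' M p = {} \<or> XP I M' M M' p = {})"
  then obtain x t where x: "x \<in> XP I M M' M p" and t: "t \<in> XP I M' M M' p" by blast
  have po: "p \<in> offered I (lec I p)" using pP unfolding offered_def by simp
  have eq: "card (XP I M M M' p) = card (XP I M' M M' p)" using EA po unfolding EA_def by blast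
  have "XP I M M M' p \<noteq> {}" by (rule nonempty_card[OF fin_XP[OF mM'] t]) (use eq in simp)
  then obtain u where u: "u \<in> XP I M M M' p" by blast
  show False
  proof (cases "card (assigned_p M' p) = pcap I p")
    case True
    have e1: "XP I M' M' M p = {}" using C_A(2)[OF u True] .
    have c1: "card (assigned_p M p) \<le> pcap I p" using matchingD(3)[OF mM pP] .
    have p1: "card (assigned_p M p) = card (assigned_p M p \<inter> assigned_p M' p) + card (XP I M M M' p) + card (XP I M M' M p)"
      using part_p_card .
    have p2: "card (assigned_p M' p) = card (assigned_p M' p \<inter> assigned_p M p) + card (XP I M' M' M p) + card (XP I M' M M' p)"
      using two.part_p_card[OF swp] .
    have c4: "card (assigned_p M p \<inter> assigned_p M' p) = card (assigned_p M' p \<inter> assigned_p M p)"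
      by (simp add: Int_commute)
    have "card (XP I M M' M p) = 0" using p1 p2 c1 c4 e1 eq True by simp
    then show False using x fin_XP[OF mM] by auto
  next
    case False
    then have lt: "card (assigned_p M' p) < pcap I p" using matchingD(3)[OF mM' pP] by simp
    have "TA I M M' (lec I p)" using u lt unfolding TA_def XP_def assigned_p_def by blast
    then have "EA I M' M (lec I p)" using TA_EB acceptableD(5) pP accM u unfolding XP_def assigned_p_def by blast
    then have ceq: "card (XP I M' M' M p) = card (XP I M M' M p)" using po unfolding EA_def by blast
    have "XP I M' M' M p \<noteq> {}" by (rule nonempty_card[OF fin_XP[OF mM] x]) (use ceq in simp)
    then show False using X_excl u by blast
  qed
qed

lemma Y_excl: "p \<in> projects I \<Longrightarrow> XP I M M' M p = {} \<or> XP I M' M M' p = {}"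
proof -
  assume pP: "p \<in> projects I"
  have lL: "lec I p \<in> lecturers I" using pP inst unfolding spa_instance_def by blast
  show ?thesis
  proof (cases "EA I M M' (lec I p)")
    case True then show ?thesis using Y_EA pP by blast
  next
    case False
    then have "EA I M' M (lec I p)" using EA_or lL by blast
    then show ?thesis using two.Y_EA[OF swp] pP by blast
  qed
qed

end

context two begin

lemma neq_of_pref: "(s,q) \<in> M1 \<Longrightarrow> is_matching I M1 \<Longrightarrow> (p,q) \<in> spref I s \<Longrightarrow> p \<noteq> q"
  using sp_irrefl acceptableD(1) matchingD(1) by metis

lemma meet_char: "(s,p) \<in> meet I M M' \<longleftrightarrow> ((s,p) \<in> M \<and> (s,p) \<in> M') \<or> ((s,p) \<in> M \<and> better_in I M M' s) \<or> ((s,p) \<in> M' \<and> better_in I M' M s)"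
proof
  assume "(s,p) \<in> meet I M M'"
  then have "(s,p) \<in> M \<inter> M' \<or> (\<exists>q. p \<noteq> q \<and> (p,q) \<in> spref I s \<and> ((s,p) \<in> M \<and> (s,q) \<in> M' \<or> (s,p) \<in> M' \<and> (s,q) \<in> M))"
    unfolding meet_def by blast
  then show "((s,p) \<in> M \<and> (s,p) \<in> M') \<or> ((s,p) \<in> M \<and> better_in I M M' s) \<or> ((s,p) \<in> M' \<and> better_in I M' M s)"
    unfolding better_in_def is_assigned_def by blast
next
  assume h: "((s,p) \<in> M \<and> (s,p) \<in> M') \<or> ((s,p) \<in> M \<and> better_in I M M' s) \<or> ((s,p) \<in> M' \<and> better_in I M' M s)"
  consider (a) "(s,p) \<in> M \<and> (s,p) \<in> M'" | (b) "(s,p) \<in> M \<and> better_in I M M' s" | (c) "(s,p) \<in> M' \<and> better_in I M' M s"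
    using h by blast
  then show "(s,p) \<in> meet I M M'"
  proof cases
    case a then show ?thesis unfolding meet_def by blast
  next
    case b
    then obtain p0 q where pq: "(s,p0) \<in> M" "(s,q) \<in> M'" "(p0,q) \<in> spref I s" using bi_iff by blast
    have "p0 = p" using unM pq(1) b by blast
    moreover have "p0 \<noteq> q" using neq_of_pref[OF pq(2) mM' pq(3)] .
    ultimately show ?thesis using pq b unfolding meet_def by blast
  next
    case c
    then obtain p0 q where pq: "(s,p0) \<in> M'" "(s,q) \<in> M" "(p0,q) \<in> spref I s" using two.bi_iff[OF swp] by blast
    have "p0 = p" using unM' pq(1) c by blast
    moreover have "p0 \<noteq> q" using neq_of_pref[OF pq(2) mM pq(3)] .
    ultimately show ?thesis using pq c unfolding meet_def by blast
  qed
qed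

lemma join_char: "(s,p) \<in> join I M M' \<longleftrightarrow> ((s,p) \<in> M \<and> (s,p) \<in> M') \<or> ((s,p) \<in> M \<and> better_in I M' M s) \<or> ((s,p) \<in> M' \<and> better_in I M M' s)"
proof
  assume "(s,p) \<in> join I M M'"
  then have "(s,p) \<in> M \<inter> M' \<or> (\<exists>q. p \<noteq> q \<and> (q,p) \<in> spref I s \<and> ((s,p) \<in> M \<and> (s,q) \<in> M' \<or> (s,p) \<in> M' \<and> (s,q) \<in> M))"
    unfolding join_def by blast
  then show "((s,p) \<in> M \<and> (s,p) \<in> M') \<or> ((s,p) \<in> M \<and> better_in I M' M s) \<or> ((s,p) \<in> M' \<and> better_in I M M' s)"
    unfolding better_in_def is_assigned_def by blast
next
  assume h: "((s,p) \<in> M \<and> (s,p) \<in> M') \<or> ((s,p) \<in> M \<and> better_in I M' M s) \<or> ((s,p) \<in> M' \<and> better_in I M M' s)"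
  consider (a) "(s,p) \<in> M \<and> (s,p) \<in> M'" | (b) "(s,p) \<in> M \<and> better_in I M' M s" | (c) "(s,p) \<in> M' \<and> better_in I M M' s"
    using h by blast
  then show "(s,p) \<in> join I M M'"
  proof cases
    case a then show ?thesis unfolding join_def by blast
  next
    case b
    then obtain p0 q where pq: "(s,p0) \<in> M'" "(s,q) \<in> M" "(p0,q) \<in> spref I s" using two.bi_iff[OF swp] by blast
    have "q = p" using unM pq(2) b by blast
    moreover have "p0 \<noteq> q" using neq_of_pref[OF pq(2) mM pq(3)] .
    ultimately have "p \<noteq> p0" "(p0,p) \<in> spref I s" using pq by auto
    then show ?thesis using pq(1) b unfolding join_def by blast
  next
    case c
    then obtain p0 q where pq: "(s,p0) \<in> M" "(s,q) \<in> M'" "(p0,q) \<in> spref I s" using bi_iff by blast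
    have "q = p" using unM' pq(2) c by blast
    moreover have "p0 \<noteq> q" using neq_of_pref[OF pq(2) mM' pq(3)] .
    ultimately have "p \<noteq> p0" "(p0,p) \<in> spref I s" using pq by auto
    then show ?thesis using pq(1) c unfolding join_def by blast
  qed
qed

lemma Np: "assigned_p (meet I M M') p = (assigned_p M p \<inter> assigned_p M' p) \<union> XP I M M M' p \<union> XP I M' M' M p"
  by (auto simp add: assigned_p_def XP_def meet_char)
lemma Jp: "assigned_p (join I M M') p = (assigned_p M p \<inter> assigned_p M' p) \<union> XP I M M' M p \<union> XP I M' M M' p"
  by (auto simp add: assigned_p_def XP_def join_char)
lemma Nl: "assigned_l I (meet I M M') l = IL I M M' l \<union> XL I M M M' l \<union> XL I M' M' M l"
  by (auto simp add: assigned_l_def XL_def IL_def meet_char)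
lemma Jl: "assigned_l I (join I M M') l = IL I M M' l \<union> XL I M M' M l \<union> XL I M' M M' l"
  by (auto simp add: assigned_l_def XL_def IL_def join_char)

lemma d_I_A: "(assigned_p M p \<inter> assigned_p M' p) \<inter> XP I M M M' p = {}"
  using bi_same unfolding XP_def assigned_p_def by blast
lemma d_I_A': "(assigned_p M p \<inter> assigned_p M' p) \<inter> XP I M' M M' p = {}"
  using bi_same unfolding XP_def assigned_p_def by blast
lemma d_I_B: "(assigned_p M p \<inter> assigned_p M' p) \<inter> XP I M M' M p = {}"
  using bi_same' unfolding XP_def assigned_p_def by blast
lemma d_I_B': "(assigned_p M p \<inter> assigned_p M' p) \<inter> XP I M' M' M p = {}"
  using bi_same' unfolding XP_def assigned_p_def by blast
lemma d_X: "XP I M1 M M' p \<inter> XP I M2 M' M p = {}"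
  using bi_excl unfolding XP_def by blast
lemma d_XL: "XL I M1 M M' l \<inter> XL I M2 M' M l = {}"
  using bi_excl unfolding XL_def by blast
lemma d_IL_A: "IL I M M' l \<inter> XL I M1 M M' l = {}"
proof -
  have "s \<notin> XL I M1 M M' l" if sI: "s \<in> IL I M M' l" for s
  proof -
    obtain p where "(s,p) \<in> M" "(s,p) \<in> M'" using sI unfolding IL_def by blast
    then show ?thesis using bi_same unfolding XL_def by blast
  qed
  then show ?thesis by blast
qed
lemma d_IL_B: "IL I M M' l \<inter> XL I M1 M' M l = {}"
proof -
  have "s \<notin> XL I M1 M' M l" if sI: "s \<in> IL I M M' l" for s
  proof -
    obtain p where "(s,p) \<in> M" "(s,p) \<in> M'" using sI unfolding IL_def by blast
    then show ?thesis using bi_same' unfolding XL_def by blast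
  qed
  then show ?thesis by blast
qed

lemma fin_I: "finite (assigned_p M p \<inter> assigned_p M' p)" using fin_p[OF mM] by blast
lemma fin_IL: "finite (IL I M M' l)"
proof (rule finite_subset[OF _ fin_l[OF mM]])
  show "IL I M M' l \<subseteq> assigned_l I M l" unfolding IL_def assigned_l_def by blast
qed

lemma card_Np: "card (assigned_p (meet I M M') p) = card (assigned_p M p \<inter> assigned_p M' p) + card (XP I M M M' p) + card (XP I M' M' M p)"
  unfolding Np by (rule card3[OF fin_I fin_XP[OF mM] fin_XP[OF mM'] d_I_A d_I_B' d_X])
lemma card_Jp: "card (assigned_p (join I M M') p) = card (assigned_p M p \<inter> assigned_p M' p) + card (XP I M M' M p) + card (XP I M' M M' p)"
proof -
  have "XP I M M' M p \<inter> XP I M' M M' p = {}" using d_X by blast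
  then show ?thesis
    unfolding Jp by (rule card3[OF fin_I fin_XP[OF mM] fin_XP[OF mM'] d_I_B d_I_A'])
qed

lemma card_Nl: "l \<in> lecturers I \<Longrightarrow> card (assigned_l I (meet I M M') l) = card (assigned_l I M' l)"
proof -
  assume lL: "l \<in> lecturers I"
  have "card (assigned_l I (meet I M M') l) = card (IL I M M' l) + card (XL I M M M' l) + card (XL I M' M' M l)"
    unfolding Nl by (rule card3[OF fin_IL fin_XL[OF mM] fin_XL[OF mM'] d_IL_A d_IL_B d_XL])
  also have "\<dots> = card (IL I M M' l) + card (XL I M' M M' l) + card (XL I M' M' M l)" using LAeq[OF lL] by simp
  also have "\<dots> = card (assigned_l I M' l)" using two.part_l_card[OF swp, of l] IL_sym[of I M M' l] by simp
  finally show ?thesis .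
qed

lemma card_Jl: "l \<in> lecturers I \<Longrightarrow> card (assigned_l I (join I M M') l) = card (assigned_l I M l)"
proof -
  assume lL: "l \<in> lecturers I"
  have d: "XL I M M' M l \<inter> XL I M' M M' l = {}" using d_XL by blast
  have "card (assigned_l I (join I M M') l) = card (IL I M M' l) + card (XL I M M' M l) + card (XL I M' M M' l)"
    unfolding Jl by (rule card3[OF fin_IL fin_XL[OF mM] fin_XL[OF mM'] d_IL_B d_IL_A d])
  also have "\<dots> = card (IL I M M' l) + card (XL I M M' M l) + card (XL I M M M' l)" using LAeq[OF lL] by simp
  also have "\<dots> = card (assigned_l I M l)" using part_l_card[of l] by simp
  finally show ?thesis .
qed

lemma Np_sub: "assigned_p (meet I M M') p \<subseteq> assigned_p M p \<union> assigned_p M' p"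
  unfolding Np XP_def by blast
lemma Jp_sub: "assigned_p (join I M M') p \<subseteq> assigned_p M p \<union> assigned_p M' p"
  unfolding Jp XP_def by blast
lemma Nl_sub: "assigned_l I (meet I M M') l \<subseteq> assigned_l I M l \<union> assigned_l I M' l"
  by (auto simp: assigned_l_def meet_char)
lemma Jl_sub: "assigned_l I (join I M M') l \<subseteq> assigned_l I M l \<union> assigned_l I M' l"
  by (auto simp: assigned_l_def join_char)
lemma Jl_diff: "assigned_l I (join I M M') l - assigned_l I M l \<subseteq> XL I M' M M' l"
  by (auto simp: assigned_l_def XL_def join_char)
lemma Jl_diff': "assigned_l I (join I M M') l - assigned_l I M' l \<subseteq> XL I M M' M l"
  by (auto simp: assigned_l_def XL_def join_char)

end

context two begin

lemma meet_uniq: "(s,p) \<in> meet I M M' \<Longrightarrow> (s,q) \<in> meet I M M' \<Longrightarrow> p = q"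
proof -
  assume a: "(s,p) \<in> meet I M M'" and b: "(s,q) \<in> meet I M M'"
  show "p = q"
  proof (cases "better_in I M' M s")
    case True
    then have "(s,p) \<in> M'" "(s,q) \<in> M'" using a b bi_excl unfolding meet_char by blast+
    then show ?thesis using unM' by blast
  next
    case False
    then have "(s,p) \<in> M" "(s,q) \<in> M" using a b unfolding meet_char by blast+
    then show ?thesis using unM by blast
  qed
qed

lemma join_uniq: "(s,p) \<in> join I M M' \<Longrightarrow> (s,q) \<in> join I M M' \<Longrightarrow> p = q"
proof -
  assume a: "(s,p) \<in> join I M M'" and b: "(s,q) \<in> join I M M'"
  show "p = q"
  proof (cases "better_in I M M' s")
    case True
    then have "(s,p) \<in> M'" "(s,q) \<in> M'" using a b bi_excl unfolding join_char by blast+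
    then show ?thesis using unM' by blast
  next
    case False
    then have "(s,p) \<in> M" "(s,q) \<in> M" using a b unfolding join_char by blast+
    then show ?thesis using unM by blast
  qed
qed

lemma meet_matching: "is_matching I (meet I M M')"
  unfolding is_matching_def
proof (intro conjI)
  show "\<forall>(s,p)\<in>meet I M M'. acceptable I s p"
  proof clarify
    fix s p assume "(s,p) \<in> meet I M M'"
    then have "(s,p) \<in> M \<or> (s,p) \<in> M'" unfolding meet_char by blast
    then show "acceptable I s p" using accM accM' by blast
  qed
  show "\<forall>s p q. (s,p) \<in> meet I M M' \<longrightarrow> (s,q) \<in> meet I M M' \<longrightarrow> p = q" using meet_uniq by blast
  show "\<forall>p\<in>projects I. card (assigned_p (meet I M M') p) \<le> pcap I p"
  proof
    fix p assume pP: "p \<in> projects I"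
    show "card (assigned_p (meet I M M') p) \<le> pcap I p"
    proof (cases "XP I M M M' p = {}")
      case True
      then have "assigned_p (meet I M M') p \<subseteq> assigned_p M' p" unfolding Np XP_def by blast
      then have "card (assigned_p (meet I M M') p) \<le> card (assigned_p M' p)" using card_mono[OF fin_p[OF mM']] by blast
      then show ?thesis using matchingD(3)[OF mM' pP] by simp
    next
      case False
      then have "XP I M' M' M p = {}" using X_excl by blast
      then have "assigned_p (meet I M M') p \<subseteq> assigned_p M p" unfolding Np XP_def by blast
      then have "card (assigned_p (meet I M M') p) \<le> card (assigned_p M p)" using card_mono[OF fin_p[OF mM]] by blast
      then show ?thesis using matchingD(3)[OF mM pP] by simp
    qed
  qed
  show "\<forall>l\<in>lecturers I. card (assigned_l I (meet I M M') l) \<le> lcap I l"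
    using card_Nl matchingD(4)[OF mM'] by simp
qed

lemma join_matching: "is_matching I (join I M M')"
  unfolding is_matching_def
proof (intro conjI)
  show "\<forall>(s,p)\<in>join I M M'. acceptable I s p"
  proof clarify
    fix s p assume "(s,p) \<in> join I M M'"
    then have "(s,p) \<in> M \<or> (s,p) \<in> M'" unfolding join_char by blast
    then show "acceptable I s p" using accM accM' by blast
  qed
  show "\<forall>s p q. (s,p) \<in> join I M M' \<longrightarrow> (s,q) \<in> join I M M' \<longrightarrow> p = q" using join_uniq by blast
  show "\<forall>p\<in>projects I. card (assigned_p (join I M M') p) \<le> pcap I p"
  proof
    fix p assume pP: "p \<in> projects I"
    show "card (assigned_p (join I M M') p) \<le> pcap I p"
    proof (cases "XP I M M' M p = {}")
      case True
      then have "assigned_p (join I M M') p \<subseteq> assigned_p M' p" unfolding Jp XP_def by blast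
      then have "card (assigned_p (join I M M') p) \<le> card (assigned_p M' p)" using card_mono[OF fin_p[OF mM']] by blast
      then show ?thesis using matchingD(3)[OF mM' pP] by simp
    next
      case False
      then have "XP I M' M M' p = {}" using Y_excl[OF pP] by blast
      then have "assigned_p (join I M M') p \<subseteq> assigned_p M p" unfolding Jp XP_def by blast
      then have "card (assigned_p (join I M M') p) \<le> card (assigned_p M p)" using card_mono[OF fin_p[OF mM]] by blast
      then show ?thesis using matchingD(3)[OF mM pP] by simp
    qed
  qed
  show "\<forall>l\<in>lecturers I. card (assigned_l I (join I M M') l) \<le> lcap I l"
    using card_Jl matchingD(4)[OF mM] by simp
qed

lemma meet_assigned: "is_assigned (meet I M M') s \<longleftrightarrow> is_assigned M s"
proof
  assume "is_assigned (meet I M M') s"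
  then obtain p where "(s,p) \<in> meet I M M'" unfolding is_assigned_def by blast
  then have "(s,p) \<in> M \<or> (s,p) \<in> M'" unfolding meet_char by blast
  then show "is_assigned M s" using R1' unfolding is_assigned_def by blast
next
  assume a: "is_assigned M s"
  then obtain p where p: "(s,p) \<in> M" unfolding is_assigned_def by blast
  obtain q where q: "(s,q) \<in> M'" using R1[OF a] unfolding is_assigned_def by blast
  show "is_assigned (meet I M M') s"
  proof (cases "(s,p) \<in> M'")
    case True then show ?thesis using p unfolding meet_char is_assigned_def by blast
  next
    case False
    then have "better_in I M M' s \<or> better_in I M' M s" using bi_cases p by blast
    then show ?thesis using p q unfolding meet_char is_assigned_def by blast
  qed
qed

lemma join_assigned: "is_assigned (join I M M') s \<longleftrightarrow> is_assigned M s"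
proof
  assume "is_assigned (join I M M') s"
  then obtain p where "(s,p) \<in> join I M M'" unfolding is_assigned_def by blast
  then have "(s,p) \<in> M \<or> (s,p) \<in> M'" unfolding join_char by blast
  then show "is_assigned M s" using R1' unfolding is_assigned_def by blast
next
  assume a: "is_assigned M s"
  then obtain p where p: "(s,p) \<in> M" unfolding is_assigned_def by blast
  obtain q where q: "(s,q) \<in> M'" using R1[OF a] unfolding is_assigned_def by blast
  show "is_assigned (join I M M') s"
  proof (cases "(s,p) \<in> M'")
    case True then show ?thesis using p unfolding join_char is_assigned_def by blast
  next
    case False
    then have "better_in I M M' s \<or> better_in I M' M s" using bi_cases p by blast
    then show ?thesis using p q unfolding join_char is_assigned_def by blast
  qed
qed

lemma better_sc:
  assumes "(s,q) \<in> M" "better_in I M M' s" "(p,q) \<in> spref I s"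
  shows "\<exists>q'. (s,q') \<in> M' \<and> (p,q') \<in> spref I s"
proof -
  obtain q0 q' where h: "(s,q0) \<in> M" "(s,q') \<in> M'" "(q0,q') \<in> spref I s" using assms(2) bi_iff by blast
  have "q0 = q" using unM h(1) assms(1) by blast
  then have "(p,q') \<in> spref I s" using sp_trans acceptableD(1)[OF accM[OF assms(1)]] assms(3) h(3) by blast
  then show ?thesis using h(2) by blast
qed

lemma better_sc': "(s,q) \<in> M' \<Longrightarrow> better_in I M' M s \<Longrightarrow> (p,q) \<in> spref I s \<Longrightarrow> \<exists>q'. (s,q') \<in> M \<and> (p,q') \<in> spref I s"
  using two.better_sc[OF swp] .

lemma notin_of_sc:
  assumes "s \<in> students I" "\<not> is_assigned M1 s \<or> (\<exists>q. (s,q) \<in> M1 \<and> (p,q) \<in> spref I s)" "is_matching I M1"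
  shows "(s,p) \<notin> M1"
proof
  assume a: "(s,p) \<in> M1"
  then obtain q where "(s,q) \<in> M1" "(p,q) \<in> spref I s" using assms(2) unfolding is_assigned_def by blast
  moreover have "q = p" using calculation(1) a matchingD(2)[OF assms(3)] by blast
  ultimately show False using sp_irrefl[OF assms(1)] by simp
qed

lemma meet_sc:
  assumes ac: "acceptable I s p" and sc: "\<not> is_assigned (meet I M M') s \<or> (\<exists>q. (s,q) \<in> meet I M M' \<and> (p,q) \<in> spref I s)"
  shows "\<not> is_assigned M s \<or> (\<exists>q. (s,q) \<in> M \<and> (p,q) \<in> spref I s)"
    "\<not> is_assigned M' s \<or> (\<exists>q. (s,q) \<in> M' \<and> (p,q) \<in> spref I s)"
    "(s,p) \<notin> M" "(s,p) \<notin> M'"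
proof -
  have sS: "s \<in> students I" using acceptableD(1)[OF ac] .
  have both: "(\<not> is_assigned M s \<or> (\<exists>q. (s,q) \<in> M \<and> (p,q) \<in> spref I s)) \<and>
    (\<not> is_assigned M' s \<or> (\<exists>q. (s,q) \<in> M' \<and> (p,q) \<in> spref I s))"
  proof (cases "is_assigned (meet I M M') s")
    case False
    then have "\<not> is_assigned M s" using meet_assigned by blast
    moreover then have "\<not> is_assigned M' s" using R1' by blast
    ultimately show ?thesis by blast
  next
    case True
    then obtain q where q: "(s,q) \<in> meet I M M'" "(p,q) \<in> spref I s" using sc by blast
    consider (a) "(s,q) \<in> M \<and> (s,q) \<in> M'" | (b) "(s,q) \<in> M \<and> better_in I M M' s" | (c) "(s,q) \<in> M' \<and> better_in I M' M s"
      using q(1) unfolding meet_char by blast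
    then show ?thesis
    proof cases
      case a then show ?thesis using q(2) by blast
    next
      case b then show ?thesis using q(2) better_sc by blast
    next
      case c then show ?thesis using q(2) better_sc' by blast
    qed
  qed
  then show "\<not> is_assigned M s \<or> (\<exists>q. (s,q) \<in> M \<and> (p,q) \<in> spref I s)"
    "\<not> is_assigned M' s \<or> (\<exists>q. (s,q) \<in> M' \<and> (p,q) \<in> spref I s)" by blast+
  then show "(s,p) \<notin> M" "(s,p) \<notin> M'" using notin_of_sc[OF sS] mM mM' by blast+
qed

lemma join_cases:
  assumes ac: "acceptable I s p" and sc: "\<not> is_assigned (join I M M') s \<or> (\<exists>q. (s,q) \<in> join I M M' \<and> (p,q) \<in> spref I s)"
  shows "((\<not> is_assigned M s \<or> (\<exists>q. (s,q) \<in> M \<and> (p,q) \<in> spref I s)) \<and>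
          (\<not> is_assigned M' s \<or> (\<exists>q. (s,q) \<in> M' \<and> (p,q) \<in> spref I s))) \<or>
    (\<exists>r0 q0. better_in I M M' s \<and> (s,r0) \<in> M \<and> (s,q0) \<in> M' \<and> (p,q0) \<in> spref I s \<and> (p,r0) \<notin> spref I s) \<or>
    (\<exists>r0 q0. better_in I M' M s \<and> (s,r0) \<in> M' \<and> (s,q0) \<in> M \<and> (p,q0) \<in> spref I s \<and> (p,r0) \<notin> spref I s)"
proof (cases "is_assigned (join I M M') s")
  case False
  then have "\<not> is_assigned M s" using join_assigned by blast
  moreover then have "\<not> is_assigned M' s" using R1' by blast
  ultimately show ?thesis by blast
next
  case True
  then obtain q where q: "(s,q) \<in> join I M M'" "(p,q) \<in> spref I s" using sc by blast
  consider (a) "(s,q) \<in> M \<and> (s,q) \<in> M'" | (b) "(s,q) \<in> M \<and> better_in I M' M s" | (c) "(s,q) \<in> M' \<and> better_in I M M' s"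
    using q(1) unfolding join_char by blast
  then show ?thesis
  proof cases
    case a then show ?thesis using q(2) by blast
  next
    case b
    then obtain q0 q' where h: "(s,q0) \<in> M'" "(s,q') \<in> M" "(q0,q') \<in> spref I s" using two.bi_iff[OF swp] by blast
    show ?thesis
    proof (cases "(p,q0) \<in> spref I s")
      case True then show ?thesis using b h q(2) by blast
    next
      case False
      have "q' = q" using unM h(2) b by blast
      then show ?thesis using False b h q(2) by blast
    qed
  next
    case c
    then obtain q0 q' where h: "(s,q0) \<in> M" "(s,q') \<in> M'" "(q0,q') \<in> spref I s" using bi_iff by blast
    show ?thesis
    proof (cases "(p,q0) \<in> spref I s")
      case True then show ?thesis using c h q(2) by blast
    next
      case False
      have "q' = q" using unM' h(2) c by blast
      then show ?thesis using False c h q(2) by blast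
    qed
  qed
qed

end

context two begin

lemma meet_core:
  assumes ac: "acceptable I s p" and ea: "EA I M M' (lec I p)"
    and allM: "\<forall>x\<in>assigned_p M p. (x,s) \<in> lpref I (lec I p)"
    and allM': "\<forall>x\<in>assigned_p M' p. (x,s) \<in> lpref I (lec I p)"
    and dM: "card (assigned_p M p) = pcap I p \<or> (card (assigned_l I M (lec I p)) = lcap I (lec I p) \<and>
       s \<notin> assigned_l I M (lec I p) \<and> (\<forall>x\<in>assigned_l I M (lec I p). (x,s) \<in> lpref I (lec I p)))"
    and dM': "card (assigned_p M' p) = pcap I p \<or> (card (assigned_l I M' (lec I p)) = lcap I (lec I p) \<and>
       s \<notin> assigned_l I M' (lec I p) \<and> (\<forall>x\<in>assigned_l I M' (lec I p). (x,s) \<in> lpref I (lec I p)))"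
    and cond: "(card (assigned_p (meet I M M') p) < pcap I p \<and> card (assigned_l I (meet I M M') (lec I p)) < lcap I (lec I p)) \<or>
    (card (assigned_p (meet I M M') p) < pcap I p \<and> card (assigned_l I (meet I M M') (lec I p)) = lcap I (lec I p) \<and>
       (s \<in> assigned_l I (meet I M M') (lec I p) \<or> (\<exists>w\<in>assigned_l I (meet I M M') (lec I p). (s,w) \<in> lpref I (lec I p)))) \<or>
    (card (assigned_p (meet I M M') p) = pcap I p \<and> (\<exists>w\<in>assigned_p (meet I M M') p. (s,w) \<in> lpref I (lec I p)))"
  shows False
proof -
  define l where "l = lec I p"
  define N where "N = meet I M M'"
  have lL: "l \<in> lecturers I" using acceptableD(5)[OF ac] l_def by simp
  have po: "p \<in> offered I l" using acceptableD(7)[OF ac] l_def by simp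
  note asym = lp_asym[OF lL]
  note trans = lp_trans[OF lL]
  have cNl: "card (assigned_l I N l) = card (assigned_l I M' l)" using card_Nl[OF lL] N_def by simp
  have cMl: "card (assigned_l I M l) = card (assigned_l I M' l)" using card_l_eq[OF lL] .
  have cNp: "card (assigned_p N p) = card (assigned_p M p \<inter> assigned_p M' p) + card (XP I M M M' p) + card (XP I M' M' M p)"
    using card_Np N_def by simp
  have cMp: "card (assigned_p M p) = card (assigned_p M p \<inter> assigned_p M' p) + card (XP I M M M' p) + card (XP I M M' M p)"
    using part_p_card .
  have cM'p: "card (assigned_p M' p) = card (assigned_p M p \<inter> assigned_p M' p) + card (XP I M' M' M p) + card (XP I M' M M' p)"
    using two.part_p_card[OF swp, of p] by (simp add: Int_commute)
  have eaP: "card (XP I M M M' p) = card (XP I M' M M' p)" using ea po l_def unfolding EA_def by blast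
  have Nl_sub': "assigned_l I N l \<subseteq> assigned_l I M l \<union> assigned_l I M' l" using Nl_sub N_def by simp
  have Np_sub': "assigned_p N p \<subseteq> assigned_p M p \<union> assigned_p M' p" using Np_sub N_def by simp
  have cond': "(card (assigned_p N p) < pcap I p \<and> card (assigned_l I N l) < lcap I l) \<or>
    (card (assigned_p N p) < pcap I p \<and> card (assigned_l I N l) = lcap I l \<and>
       (s \<in> assigned_l I N l \<or> (\<exists>w\<in>assigned_l I N l. (s,w) \<in> lpref I l))) \<or>
    (card (assigned_p N p) = pcap I p \<and> (\<exists>w\<in>assigned_p N p. (s,w) \<in> lpref I l))"
    using cond unfolding N_def l_def .
  have allM2: "\<forall>x\<in>assigned_p M p. (x,s) \<in> lpref I l" "\<forall>x\<in>assigned_p M' p. (x,s) \<in> lpref I l"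
    using allM allM' l_def by auto
  have dM2: "card (assigned_p M p) = pcap I p \<or> (card (assigned_l I M l) = lcap I l \<and>
       s \<notin> assigned_l I M l \<and> (\<forall>x\<in>assigned_l I M l. (x,s) \<in> lpref I l))" using dM l_def by simp
  have dM'2: "card (assigned_p M' p) = pcap I p \<or> (card (assigned_l I M' l) = lcap I l \<and>
       s \<notin> assigned_l I M' l \<and> (\<forall>x\<in>assigned_l I M' l. (x,s) \<in> lpref I l))" using dM' l_def by simp
  from cond' consider (P1) "card (assigned_p N p) < pcap I p" "card (assigned_l I N l) < lcap I l"
    | (P23) "card (assigned_p N p) < pcap I p" "card (assigned_l I N l) = lcap I l"
        "s \<in> assigned_l I N l \<or> (\<exists>w\<in>assigned_l I N l. (s,w) \<in> lpref I l)"
    | (P4) "card (assigned_p N p) = pcap I p" "\<exists>w\<in>assigned_p N p. (s,w) \<in> lpref I l"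
    by blast
  then show False
  proof cases
    case P4
    then obtain w where w: "w \<in> assigned_p N p" "(s,w) \<in> lpref I l" by blast
    then have "(w,s) \<in> lpref I l" using Np_sub' allM2 by blast
    then show False using w(2) asym by blast
  next
    case P1
    have u1: "card (assigned_l I M l) < lcap I l" "card (assigned_l I M' l) < lcap I l" using P1 cNl cMl by auto
    have f1: "card (assigned_p M p) = pcap I p" using dM2 u1 by auto
    have "\<not> TA I M' M l" using two.TA_full(1)[OF swp] u1 by fastforce
    then have "EA I M' M l" using two.NA[OF swp lL] by blast
    then have "card (XP I M' M' M p) = card (XP I M M' M p)" using po unfolding EA_def by blast
    then show False using cNp cMp f1 P1 by simp
  next
    case P23
    have fM': "card (assigned_l I M' l) = lcap I l" using P23 cNl by simp
    have fM: "card (assigned_l I M l) = lcap I l" using fM' cMl by simp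
    have "card (assigned_p N p) = card (assigned_p M' p)" using cNp cM'p eaP by simp
    then have "card (assigned_p M' p) \<noteq> pcap I p" using P23 by simp
    then have sM': "s \<notin> assigned_l I M' l" "\<forall>x\<in>assigned_l I M' l. (x,s) \<in> lpref I l" using dM'2 by auto
    have key: "\<exists>v\<in>assigned_l I M' l. \<forall>x\<in>assigned_l I M l. (x,v) \<in> lpref I l"
      if fp: "card (assigned_p M p) = pcap I p"
    proof -
      have "card (XP I M' M' M p) < card (XP I M M' M p)" using cNp cMp fp P23(1) by simp
      then have "\<not> EA I M' M l" using po unfolding EA_def by fastforce
      then have "TA I M' M l" using two.NA[OF swp lL] by blast
      then show ?thesis using two.TA_full(2)[OF swp] by blast
    qed
    from P23(3) show False
    proof
      assume sN: "s \<in> assigned_l I N l"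
      then have sM: "s \<in> assigned_l I M l" using Nl_sub' sM'(1) by blast
      then have "card (assigned_p M p) = pcap I p" using dM2 by blast
      then obtain v where v: "v \<in> assigned_l I M' l" "\<forall>x\<in>assigned_l I M l. (x,v) \<in> lpref I l" using key by blast
      have "(s,v) \<in> lpref I l" using v(2) sM by blast
      moreover have "(v,s) \<in> lpref I l" using v(1) sM'(2) by blast
      ultimately show False using asym by blast
    next
      assume "\<exists>w\<in>assigned_l I N l. (s,w) \<in> lpref I l"
      then obtain w where w: "w \<in> assigned_l I N l" "(s,w) \<in> lpref I l" by blast
      show False
      proof (cases "w \<in> assigned_l I M' l")
        case True
        then have "(w,s) \<in> lpref I l" using sM'(2) by blast
        then show False using w(2) asym by blast
      next
        case False
        then have wM: "w \<in> assigned_l I M l" using w(1) Nl_sub' by blast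
        show False
        proof (cases "card (assigned_p M p) = pcap I p")
          case True
          then obtain v where v: "v \<in> assigned_l I M' l" "\<forall>x\<in>assigned_l I M l. (x,v) \<in> lpref I l" using key by blast
          have "(w,v) \<in> lpref I l" using v(2) wM by blast
          moreover have "(v,s) \<in> lpref I l" using v(1) sM'(2) by blast
          ultimately have "(w,s) \<in> lpref I l" using trans by blast
          then show False using w(2) asym by blast
        next
          case False
          then have "(w,s) \<in> lpref I l" using dM2 wM by blast
          then show False using w(2) asym by blast
        qed
      qed
    qed
  qed
qed

lemma meet_stable: "stable I (meet I M M')"
  unfolding stable_def
proof (intro conjI allI notI)
  show "is_matching I (meet I M M')" using meet_matching .
  fix s p assume bl: "blocks I (meet I M M') s p"
  note be = blocks_elim[OF meet_matching bl]
  have ac: "acceptable I s p" using be(1) .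
  note ms = meet_sc[OF ac be(3)]
  note nbM = nonblock[OF stM ac ms(3) ms(1)]
  note nbM' = nonblock[OF stM' ac ms(4) ms(2)]
  have lL: "lec I p \<in> lecturers I" using acceptableD(5)[OF ac] .
  show False
  proof (cases "EA I M M' (lec I p)")
    case True
    show False using meet_core[OF ac True nbM(1) nbM'(1) nbM(2) nbM'(2) be(4)] .
  next
    case False
    then have ea: "EA I M' M (lec I p)" using EA_or[OF lL] by blast
    show False using two.meet_core[OF swp ac ea nbM'(1) nbM(1) nbM'(2) nbM(2) be(4)[unfolded meet_sym[of I M M']]] .
  qed
qed

end

context two begin

lemma join_core_a:
  assumes ac: "acceptable I s p" and ea: "EA I M M' (lec I p)"
    and allM: "\<forall>x\<in>assigned_p M p. (x,s) \<in> lpref I (lec I p)"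
    and allM': "\<forall>x\<in>assigned_p M' p. (x,s) \<in> lpref I (lec I p)"
    and dM: "card (assigned_p M p) = pcap I p \<or> (card (assigned_l I M (lec I p)) = lcap I (lec I p) \<and>
       s \<notin> assigned_l I M (lec I p) \<and> (\<forall>x\<in>assigned_l I M (lec I p). (x,s) \<in> lpref I (lec I p)))"
    and dM': "card (assigned_p M' p) = pcap I p \<or> (card (assigned_l I M' (lec I p)) = lcap I (lec I p) \<and>
       s \<notin> assigned_l I M' (lec I p) \<and> (\<forall>x\<in>assigned_l I M' (lec I p). (x,s) \<in> lpref I (lec I p)))"
    and cond: "(card (assigned_p (join I M M') p) < pcap I p \<and> card (assigned_l I (join I M M') (lec I p)) < lcap I (lec I p)) \<or>
    (card (assigned_p (join I M M') p) < pcap I p \<and> card (assigned_l I (join I M M') (lec I p)) = lcap I (lec I p) \<and>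
       (s \<in> assigned_l I (join I M M') (lec I p) \<or> (\<exists>w\<in>assigned_l I (join I M M') (lec I p). (s,w) \<in> lpref I (lec I p)))) \<or>
    (card (assigned_p (join I M M') p) = pcap I p \<and> (\<exists>w\<in>assigned_p (join I M M') p. (s,w) \<in> lpref I (lec I p)))"
  shows False
proof -
  define l where "l = lec I p"
  define J where "J = join I M M'"
  have lL: "l \<in> lecturers I" using acceptableD(5)[OF ac] l_def by simp
  have po: "p \<in> offered I l" using acceptableD(7)[OF ac] l_def by simp
  note asym = lp_asym[OF lL]
  note trans = lp_trans[OF lL]
  have cJl: "card (assigned_l I J l) = card (assigned_l I M l)" using card_Jl[OF lL] J_def by simp
  have cMl: "card (assigned_l I M l) = card (assigned_l I M' l)" using card_l_eq[OF lL] .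
  have cJp: "card (assigned_p J p) = card (assigned_p M p \<inter> assigned_p M' p) + card (XP I M M' M p) + card (XP I M' M M' p)"
    using card_Jp J_def by simp
  have cMp: "card (assigned_p M p) = card (assigned_p M p \<inter> assigned_p M' p) + card (XP I M M M' p) + card (XP I M M' M p)"
    using part_p_card .
  have eaP: "card (XP I M M M' p) = card (XP I M' M M' p)" using ea po l_def unfolding EA_def by blast
  have Jl_sub': "assigned_l I J l \<subseteq> assigned_l I M l \<union> assigned_l I M' l" using Jl_sub J_def by simp
  have Jp_sub': "assigned_p J p \<subseteq> assigned_p M p \<union> assigned_p M' p" using Jp_sub J_def by simp
  have Jl_diff2: "assigned_l I J l - assigned_l I M l \<subseteq> XL I M' M M' l" using Jl_diff J_def by simp
  have cond': "(card (assigned_p J p) < pcap I p \<and> card (assigned_l I J l) < lcap I l) \<or>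
    (card (assigned_p J p) < pcap I p \<and> card (assigned_l I J l) = lcap I l \<and>
       (s \<in> assigned_l I J l \<or> (\<exists>w\<in>assigned_l I J l. (s,w) \<in> lpref I l))) \<or>
    (card (assigned_p J p) = pcap I p \<and> (\<exists>w\<in>assigned_p J p. (s,w) \<in> lpref I l))"
    using cond unfolding J_def l_def .
  have allM2: "\<forall>x\<in>assigned_p M p. (x,s) \<in> lpref I l" "\<forall>x\<in>assigned_p M' p. (x,s) \<in> lpref I l"
    using allM allM' l_def by auto
  have dM2: "card (assigned_p M p) = pcap I p \<or> (card (assigned_l I M l) = lcap I l \<and>
       s \<notin> assigned_l I M l \<and> (\<forall>x\<in>assigned_l I M l. (x,s) \<in> lpref I l))" using dM l_def by simp
  have dM'2: "card (assigned_p M' p) = pcap I p \<or> (card (assigned_l I M' l) = lcap I l \<and>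
       s \<notin> assigned_l I M' l \<and> (\<forall>x\<in>assigned_l I M' l. (x,s) \<in> lpref I l))" using dM' l_def by simp
  from cond' consider (P1) "card (assigned_p J p) < pcap I p" "card (assigned_l I J l) < lcap I l"
    | (P23) "card (assigned_p J p) < pcap I p" "card (assigned_l I J l) = lcap I l"
        "s \<in> assigned_l I J l \<or> (\<exists>w\<in>assigned_l I J l. (s,w) \<in> lpref I l)"
    | (P4) "card (assigned_p J p) = pcap I p" "\<exists>w\<in>assigned_p J p. (s,w) \<in> lpref I l"
    by blast
  then show False
  proof cases
    case P4
    then obtain w where w: "w \<in> assigned_p J p" "(s,w) \<in> lpref I l" by blast
    then have "(w,s) \<in> lpref I l" using Jp_sub' allM2 by blast
    then show False using w(2) asym by blast
  next
    case P1
    have u1: "card (assigned_l I M l) < lcap I l" "card (assigned_l I M' l) < lcap I l" using P1 cJl cMl by auto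
    have f1: "card (assigned_p M p) = pcap I p" using dM2 u1 by auto
    have "card (assigned_p J p) = card (assigned_p M p)" using cJp cMp eaP by simp
    then show False using f1 P1 by simp
  next
    case P23
    have "card (assigned_p J p) = card (assigned_p M p)" using cJp cMp eaP by simp
    then have "card (assigned_p M p) \<noteq> pcap I p" using P23 by simp
    then have sM: "s \<notin> assigned_l I M l" "\<forall>x\<in>assigned_l I M l. (x,s) \<in> lpref I l" using dM2 by auto
    from P23(3) show False
    proof
      assume sJ: "s \<in> assigned_l I J l"
      then have "s \<in> XL I M' M M' l" using Jl_diff2 sM(1) by blast
      then obtain u where u: "u \<in> assigned_l I M l" "(s,u) \<in> lpref I l" using Adom by blast
      have "(u,s) \<in> lpref I l" using u(1) sM(2) by blast
      then show False using u(2) asym by blast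
    next
      assume "\<exists>w\<in>assigned_l I J l. (s,w) \<in> lpref I l"
      then obtain w where w: "w \<in> assigned_l I J l" "(s,w) \<in> lpref I l" by blast
      show False
      proof (cases "w \<in> assigned_l I M l")
        case True
        then have "(w,s) \<in> lpref I l" using sM(2) by blast
        then show False using w(2) asym by blast
      next
        case False
        then have "w \<in> XL I M' M M' l" using w(1) Jl_diff2 by blast
        then obtain u where u: "u \<in> assigned_l I M l" "(w,u) \<in> lpref I l" using Adom by blast
        have "(u,s) \<in> lpref I l" using u(1) sM(2) by blast
        then have "(w,s) \<in> lpref I l" using u(2) trans by blast
        then show False using w(2) asym by blast
      qed
    qed
  qed
qed

lemma better_Jl:
  assumes "better_in I M M' s" "s \<in> assigned_l I (join I M M') l"
  shows "s \<in> assigned_l I M' l"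
proof -
  have "s \<in> IL I M M' l \<union> XL I M M' M l \<union> XL I M' M M' l" using assms(2) Jl by simp
  moreover have "s \<notin> XL I M M' M l" using assms(1) bi_excl unfolding XL_def by blast
  ultimately show ?thesis unfolding IL_def XL_def assigned_l_def by blast
qed

lemma join_core_b:
  assumes ac: "acceptable I s p" and bs: "better_in I M M' s" and r0: "(s,r0) \<in> M" and q0: "(s,q0) \<in> M'"
    and pq0: "(p,q0) \<in> spref I s" and pr0: "(p,r0) \<notin> spref I s"
    and cond: "(card (assigned_p (join I M M') p) < pcap I p \<and> card (assigned_l I (join I M M') (lec I p)) < lcap I (lec I p)) \<or>
    (card (assigned_p (join I M M') p) < pcap I p \<and> card (assigned_l I (join I M M') (lec I p)) = lcap I (lec I p) \<and>
       (s \<in> assigned_l I (join I M M') (lec I p) \<or> (\<exists>w\<in>assigned_l I (join I M M') (lec I p). (s,w) \<in> lpref I (lec I p)))) \<or>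
    (card (assigned_p (join I M M') p) = pcap I p \<and> (\<exists>w\<in>assigned_p (join I M M') p. (s,w) \<in> lpref I (lec I p)))"
  shows False
proof -
  define l where "l = lec I p"
  define J where "J = join I M M'"
  have sS: "s \<in> students I" using acceptableD(1)[OF ac] .
  have lL: "l \<in> lecturers I" using acceptableD(5)[OF ac] l_def by simp
  have po: "p \<in> offered I l" using acceptableD(7)[OF ac] l_def by simp
  have pP: "p \<in> projects I" using acceptableD(2)[OF ac] .
  note asym = lp_asym[OF lL]
  note trans = lp_trans[OF lL]
  have "p \<noteq> q0" using pq0 sp_irrefl[OF sS] by blast
  then have nM': "(s,p) \<notin> M'" using q0 unM' by blast
  have scM': "\<not> is_assigned M' s \<or> (\<exists>q. (s,q) \<in> M' \<and> (p,q) \<in> spref I s)" using q0 pq0 by blast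
  note nb = nonblock[OF stM' ac nM' scM']
  have allM': "\<forall>x\<in>assigned_p M' p. (x,s) \<in> lpref I l" using nb(1) l_def by simp
  have dM': "card (assigned_p M' p) = pcap I p \<or> (card (assigned_l I M' l) = lcap I l \<and>
       s \<notin> assigned_l I M' l \<and> (\<forall>x\<in>assigned_l I M' l. (x,s) \<in> lpref I l))" using nb(2) l_def by simp
  have cJl: "card (assigned_l I J l) = card (assigned_l I M l)" using card_Jl[OF lL] J_def by simp
  have cMl: "card (assigned_l I M l) = card (assigned_l I M' l)" using card_l_eq[OF lL] .
  have cJp: "card (assigned_p J p) = card (assigned_p M p \<inter> assigned_p M' p) + card (XP I M M' M p) + card (XP I M' M M' p)"
    using card_Jp J_def by simp
  have cMp: "card (assigned_p M p) = card (assigned_p M p \<inter> assigned_p M' p) + card (XP I M M M' p) + card (XP I M M' M p)"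
    using part_p_card .
  have cM'p: "card (assigned_p M' p) = card (assigned_p M p \<inter> assigned_p M' p) + card (XP I M' M' M p) + card (XP I M' M M' p)"
    using two.part_p_card[OF swp, of p] by (simp add: Int_commute)
  have JpEq: "assigned_p J p = (assigned_p M p \<inter> assigned_p M' p) \<union> XP I M M' M p \<union> XP I M' M M' p" using Jp J_def by simp
  have Jl_diff2: "assigned_l I J l - assigned_l I M l \<subseteq> XL I M' M M' l" using Jl_diff J_def by simp
  have Jl_diff3: "assigned_l I J l - assigned_l I M' l \<subseteq> XL I M M' M l" using Jl_diff' J_def by simp
  have sJ: "s \<in> assigned_l I J l \<Longrightarrow> s \<in> assigned_l I M' l" using better_Jl[OF bs] J_def by simp
  have cond': "(card (assigned_p J p) < pcap I p \<and> card (assigned_l I J l) < lcap I l) \<or>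
    (card (assigned_p J p) < pcap I p \<and> card (assigned_l I J l) = lcap I l \<and>
       (s \<in> assigned_l I J l \<or> (\<exists>w\<in>assigned_l I J l. (s,w) \<in> lpref I l))) \<or>
    (card (assigned_p J p) = pcap I p \<and> (\<exists>w\<in>assigned_p J p. (s,w) \<in> lpref I l))"
    using cond unfolding J_def l_def .
  have BdomL: "\<exists>v\<in>assigned_l I M' l. (w,v) \<in> lpref I l" if "w \<in> XL I M M' M l" for w
    using Bdom that by blast
  have finXP: "finite (XP I M1 M2 M3 p)" if "is_matching I M1" for M1 M2 M3 using fin_XP[OF that] .
  have r0acc: "r0 \<in> acc I s" "p \<in> acc I s" using acceptableD(3)[OF accM[OF r0]] acceptableD(3)[OF ac] by auto
  consider (b1) "p = r0" | (b2) "(r0,p) \<in> spref I s" using sp_total[OF sS r0acc] pr0 by blast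
  then show False
  proof cases
    case b1
    have sA: "s \<in> XP I M M M' p" using r0 bs b1 unfolding XP_def assigned_p_def by blast
    have B'0: "XP I M' M' M p = {}" using X_excl sA by blast
    show False
    proof (cases "card (assigned_p M' p) = pcap I p")
      case True
      have "card (XP I M M M' p) \<le> card (XP I M' M M' p)" using C_A(1)[OF sA True] .
      moreover have "card (XP I M M M' p) > 0" using sA finXP[OF mM] card_gt_0_iff by blast
      ultimately have "XP I M' M M' p \<noteq> {}" by auto
      then have B0: "XP I M M' M p = {}" using Y_excl[OF pP] by blast
      have cJ: "card (assigned_p J p) = pcap I p" using cJp cM'p B0 B'0 True by simp
      have JsubM': "assigned_p J p \<subseteq> assigned_p M' p" using JpEq B0 unfolding XP_def by blast
      show False using cond'
      proof (elim disjE conjE)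
        fix w assume "(\<exists>w\<in>assigned_p J p. (s,w) \<in> lpref I l)"
        then obtain w where w: "w \<in> assigned_p J p" "(s,w) \<in> lpref I l" by blast
        then have "(w,s) \<in> lpref I l" using JsubM' allM' by blast
        then show False using w(2) asym by blast
      qed (use cJ in simp_all)
    next
      case False
      then have sM': "card (assigned_l I M' l) = lcap I l" "s \<notin> assigned_l I M' l" "\<forall>x\<in>assigned_l I M' l. (x,s) \<in> lpref I l"
        using dM' by auto
      have lt: "card (assigned_p M' p) < pcap I p" using False matchingD(3)[OF mM' pP] by simp
      have "TA I M M' l" using r0 b1 bs lt l_def unfolding TA_def by blast
      then have "EA I M' M l" using TA_EB[OF lL] by blast
      then have "card (XP I M' M' M p) = card (XP I M M' M p)" using po unfolding EA_def by blast
      then have B0: "XP I M M' M p = {}" using B'0 finXP[OF mM] by simp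
      have JsubM': "assigned_p J p \<subseteq> assigned_p M' p" using JpEq B0 unfolding XP_def by blast
      show False using cond'
      proof (elim disjE conjE)
        assume "card (assigned_l I J l) < lcap I l" then show False using cJl cMl sM'(1) by simp
      next
        assume "s \<in> assigned_l I J l" then show False using sJ sM'(2) by blast
      next
        assume "\<exists>w\<in>assigned_l I J l. (s,w) \<in> lpref I l"
        then obtain w where w: "w \<in> assigned_l I J l" "(s,w) \<in> lpref I l" by blast
        show False
        proof (cases "w \<in> assigned_l I M' l")
          case True then show False using sM'(3) w(2) asym by blast
        next
          case False
          then have "w \<in> XL I M M' M l" using w(1) Jl_diff3 by blast
          then obtain v where v: "v \<in> assigned_l I M' l" "(w,v) \<in> lpref I l" using BdomL by blast
          have "(v,s) \<in> lpref I l" using v(1) sM'(3) by blast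
          then have "(w,s) \<in> lpref I l" using v(2) trans by blast
          then show False using w(2) asym by blast
        qed
      next
        assume "\<exists>w\<in>assigned_p J p. (s,w) \<in> lpref I l"
        then obtain w where w: "w \<in> assigned_p J p" "(s,w) \<in> lpref I l" by blast
        then have "(w,s) \<in> lpref I l" using JsubM' allM' by blast
        then show False using w(2) asym by blast
      qed
    qed
  next
    case b2
    from cond' consider (P1) "card (assigned_p J p) < pcap I p" "card (assigned_l I J l) < lcap I l"
      | (P23) "card (assigned_p J p) < pcap I p" "card (assigned_l I J l) = lcap I l"
          "s \<in> assigned_l I J l \<or> (\<exists>w\<in>assigned_l I J l. (s,w) \<in> lpref I l)"
      | (P4) "card (assigned_p J p) = pcap I p" "\<exists>w\<in>assigned_p J p. (s,w) \<in> lpref I l"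
      by blast
    then show False
    proof cases
      case P4
      note cJ = P4(1) note ex = P4(2)
      then obtain w where w: "w \<in> assigned_p J p" "(s,w) \<in> lpref I l" by blast
      show False
      proof (cases "w \<in> assigned_p M' p")
        case True then show False using allM' w(2) asym by blast
      next
        case False
        then have wB: "w \<in> XP I M M' M p" using w(1) JpEq unfolding XP_def by blast
        then have A'0: "XP I M' M M' p = {}" using Y_excl[OF pP] by blast
        have wBL: "w \<in> XL I M M' M l" using wB l_def p_sub_l unfolding XP_def XL_def by blast
        from dM' show False
        proof
          assume fM': "card (assigned_p M' p) = pcap I p"
          have ceq: "card (XP I M' M' M p) = card (XP I M M' M p)" using cJ cJp cM'p fM' A'0 by simp
          have "XP I M' M' M p \<noteq> {}" by (rule nonempty_card[OF finXP[OF mM] wB]) (use ceq in simp)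
          then obtain v where v: "v \<in> XP I M' M' M p" by blast
          have "\<forall>y\<in>assigned_p M p. (y,v) \<in> lpref I (lec I p)" using two.F_nb(1)[OF swp v] .
          then have "(w,v) \<in> lpref I l" using wB l_def unfolding XP_def by blast
          moreover have "(v,s) \<in> lpref I l" using v allM' unfolding XP_def by blast
          ultimately have "(w,s) \<in> lpref I l" using trans by blast
          then show False using w(2) asym by blast
        next
          assume "card (assigned_l I M' l) = lcap I l \<and> s \<notin> assigned_l I M' l \<and> (\<forall>x\<in>assigned_l I M' l. (x,s) \<in> lpref I l)"
          then have all: "\<forall>x\<in>assigned_l I M' l. (x,s) \<in> lpref I l" by blast
          obtain v where v: "v \<in> assigned_l I M' l" "(w,v) \<in> lpref I l" using BdomL[OF wBL] by blast
          have "(w,s) \<in> lpref I l" using v all trans by blast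
          then show False using w(2) asym by blast
        qed
      qed
    next
      case P1
      note cJ = P1(1) note cl = P1(2)
      have u1: "card (assigned_l I M l) < lcap I l" "card (assigned_l I M' l) < lcap I l" using cl cJl cMl by auto
      have f1: "card (assigned_p M' p) = pcap I p" using dM' u1 by auto
      have "\<not> TA I M' M l" using two.TA_full(1)[OF swp] u1 by fastforce
      then have "EA I M' M l" using two.NA[OF swp lL] by blast
      then have "card (XP I M' M' M p) = card (XP I M M' M p)" using po unfolding EA_def by blast
      then show False using cJp cM'p f1 cJ by simp
    next
      case P23
      note cJ = P23(1) note cl = P23(2) note ex = P23(3)
      from dM' show False
      proof
        assume "card (assigned_l I M' l) = lcap I l \<and> s \<notin> assigned_l I M' l \<and> (\<forall>x\<in>assigned_l I M' l. (x,s) \<in> lpref I l)"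
        then have sM': "s \<notin> assigned_l I M' l" "\<forall>x\<in>assigned_l I M' l. (x,s) \<in> lpref I l" by blast+
        from ex show False
        proof
          assume "s \<in> assigned_l I J l" then show False using sJ sM'(1) by blast
        next
          assume "\<exists>w\<in>assigned_l I J l. (s,w) \<in> lpref I l"
          then obtain w where w: "w \<in> assigned_l I J l" "(s,w) \<in> lpref I l" by blast
          show False
          proof (cases "w \<in> assigned_l I M' l")
            case True then show False using sM'(2) w(2) asym by blast
          next
            case False
            then have "w \<in> XL I M M' M l" using w(1) Jl_diff3 by blast
            then obtain v where v: "v \<in> assigned_l I M' l" "(w,v) \<in> lpref I l" using BdomL by blast
            have "(w,s) \<in> lpref I l" using v sM'(2) trans by blast
            then show False using w(2) asym by blast
          qed
        qed
      next
        assume fM': "card (assigned_p M' p) = pcap I p"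
        have nEB: "\<not> EA I M' M l"
        proof
          assume "EA I M' M l"
          then have "card (XP I M' M' M p) = card (XP I M M' M p)" using po unfolding EA_def by blast
          then show False using cJp cM'p fM' cJ by simp
        qed
        then have "TA I M' M l" using two.NA[OF swp lL] by blast
        then have "\<not> TA I M M' l" using TA_excl by blast
        then have "EA I M M' l" using NA[OF lL] by blast
        then have eaP: "card (XP I M M M' p) = card (XP I M' M M' p)" using po unfolding EA_def by blast
        have cMlt: "card (assigned_p M p) < pcap I p" using cJp cMp eaP cJ by simp
        have "card (XP I M M' M p) < card (XP I M' M' M p)" using cJp cM'p fM' cJ by simp
        then have "XP I M' M' M p \<noteq> {}" by auto
        then obtain v where v: "v \<in> XP I M' M' M p" by blast
        have "card (assigned_p M p) = pcap I p \<or> (card (assigned_l I M (lec I p)) = lcap I (lec I p) \<and>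
          v \<notin> assigned_l I M (lec I p) \<and> (\<forall>x\<in>assigned_l I M (lec I p). (x,v) \<in> lpref I (lec I p)))"
          using two.F_nb(2)[OF swp v] .
        then have allv: "\<forall>x\<in>assigned_l I M l. (x,v) \<in> lpref I l" using cMlt l_def by auto
        have vs: "(v,s) \<in> lpref I l" using v allM' unfolding XP_def by blast
        from ex show False
        proof
          assume "s \<in> assigned_l I J l"
          then have "s \<in> XL I M' M M' l" using sJ bs unfolding XL_def by blast
          then obtain u where u: "u \<in> assigned_l I M l" "(s,u) \<in> lpref I l" using Adom by blast
          have "(u,s) \<in> lpref I l" using u(1) allv vs trans by blast
          then show False using u(2) asym by blast
        next
          assume "\<exists>w\<in>assigned_l I J l. (s,w) \<in> lpref I l"
          then obtain w where w: "w \<in> assigned_l I J l" "(s,w) \<in> lpref I l" by blast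
          show False
          proof (cases "w \<in> assigned_l I M l")
            case True
            then have "(w,s) \<in> lpref I l" using allv vs trans by blast
            then show False using w(2) asym by blast
          next
            case False
            then have "w \<in> XL I M' M M' l" using w(1) Jl_diff2 by blast
            then obtain u where u: "u \<in> assigned_l I M l" "(w,u) \<in> lpref I l" using Adom by blast
            have "(u,s) \<in> lpref I l" using u(1) allv vs trans by blast
            then have "(w,s) \<in> lpref I l" using u(2) trans by blast
            then show False using w(2) asym by blast
          qed
        qed
      qed
    qed
  qed
qed

lemma join_stable: "stable I (join I M M')"
  unfolding stable_def
proof (intro conjI allI notI)
  show "is_matching I (join I M M')" using join_matching .
  fix s p assume bl: "blocks I (join I M M') s p"
  note be = blocks_elim[OF join_matching bl]
  have ac: "acceptable I s p" using be(1) .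
  have sS: "s \<in> students I" using acceptableD(1)[OF ac] .
  have lL: "lec I p \<in> lecturers I" using acceptableD(5)[OF ac] .
  note jc = join_cases[OF ac be(3)]
  note cond = be(4)
  note cond2 = cond[unfolded join_sym[of I M M']]
  consider (c1) "(\<not> is_assigned M s \<or> (\<exists>q. (s,q) \<in> M \<and> (p,q) \<in> spref I s)) \<and>
          (\<not> is_assigned M' s \<or> (\<exists>q. (s,q) \<in> M' \<and> (p,q) \<in> spref I s))"
    | (c2) r0 q0 where "better_in I M M' s" "(s,r0) \<in> M" "(s,q0) \<in> M'" "(p,q0) \<in> spref I s" "(p,r0) \<notin> spref I s"
    | (c3) r0 q0 where "better_in I M' M s" "(s,r0) \<in> M'" "(s,q0) \<in> M" "(p,q0) \<in> spref I s" "(p,r0) \<notin> spref I s"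
    using jc by blast
  then show False
  proof cases
    case c1
    have scM: "\<not> is_assigned M s \<or> (\<exists>q. (s,q) \<in> M \<and> (p,q) \<in> spref I s)" using c1 by blast
    have scM': "\<not> is_assigned M' s \<or> (\<exists>q. (s,q) \<in> M' \<and> (p,q) \<in> spref I s)" using c1 by blast
    have nM: "(s,p) \<notin> M" using notin_of_sc[OF sS scM mM] .
    have nM': "(s,p) \<notin> M'" using notin_of_sc[OF sS scM' mM'] .
    note nbM = nonblock[OF stM ac nM scM]
    note nbM' = nonblock[OF stM' ac nM' scM']
    show False
    proof (cases "EA I M M' (lec I p)")
      case True
      show False using join_core_a[OF ac True nbM(1) nbM'(1) nbM(2) nbM'(2) cond] .
    next
      case False
      then have ea: "EA I M' M (lec I p)" using EA_or[OF lL] by blast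
      show False using two.join_core_a[OF swp ac ea nbM'(1) nbM(1) nbM'(2) nbM(2) cond2] .
    qed
  next
    case c2
    then show False using join_core_b[OF ac c2(1-5) cond] by blast
  next
    case c3
    then show False using two.join_core_b[OF swp ac c3(1-5) cond2] by blast
  qed
qed

end

context spa_loc begin

lemma dom_refl: "is_matching I M \<Longrightarrow> dominates I M M"
  unfolding dominates_def sindiff_def is_assigned_def by blast

lemma dom_trans:
  assumes m1: "is_matching I M1" and m2: "is_matching I M2" and m3: "is_matching I M3"
    and d1: "dominates I M1 M2" and d2: "dominates I M2 M3"
  shows "dominates I M1 M3"
  unfolding dominates_def
proof
  fix s assume sS: "s \<in> students I"
  have h1: "sprefers I s M1 M2 \<or> sindiff s M1 M2" using d1 sS unfolding dominates_def by blast
  have h2: "sprefers I s M2 M3 \<or> sindiff s M2 M3" using d2 sS unfolding dominates_def by blast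
  note u1 = matchingD(2)[OF m1] and u2 = matchingD(2)[OF m2] and u3 = matchingD(2)[OF m3]
  show "sprefers I s M1 M3 \<or> sindiff s M1 M3"
  proof (cases "is_assigned M2 s")
    case False
    then have "\<not> sprefers I s M1 M2" "\<not> sprefers I s M2 M3" unfolding sprefers_def is_assigned_def by blast+
    then have "sindiff s M1 M2" "sindiff s M2 M3" using h1 h2 by blast+
    then have "\<not> is_assigned M1 s" "\<not> is_assigned M3 s" using False unfolding sindiff_def is_assigned_def by blast+
    then show ?thesis unfolding sindiff_def by blast
  next
    case True
    then obtain b where b: "(s,b) \<in> M2" unfolding is_assigned_def by blast
    have A: "\<exists>a. (s,a) \<in> M1 \<and> (a = b \<or> (a,b) \<in> spref I s)"
    proof -
      from h1 show ?thesis
      proof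
        assume "sprefers I s M1 M2"
        then obtain a b' where "(s,a) \<in> M1" "(s,b') \<in> M2" "(a,b') \<in> spref I s" unfolding sprefers_def by blast
        then show ?thesis using u2 b by blast
      next
        assume "sindiff s M1 M2"
        then obtain a where "(s,a) \<in> M1" "(s,a) \<in> M2" using True unfolding sindiff_def is_assigned_def by blast
        then show ?thesis using u2 b by blast
      qed
    qed
    have C: "\<exists>c. (s,c) \<in> M3 \<and> (b = c \<or> (b,c) \<in> spref I s)"
    proof -
      from h2 show ?thesis
      proof
        assume "sprefers I s M2 M3"
        then obtain b' c where "(s,b') \<in> M2" "(s,c) \<in> M3" "(b',c) \<in> spref I s" unfolding sprefers_def by blast
        then show ?thesis using u2 b by blast
      next
        assume "sindiff s M2 M3"
        then obtain c where "(s,c) \<in> M2" "(s,c) \<in> M3" using True unfolding sindiff_def is_assigned_def by blast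
        then show ?thesis using u2 b by blast
      qed
    qed
    obtain a where a: "(s,a) \<in> M1" "a = b \<or> (a,b) \<in> spref I s" using A by blast
    obtain c where c: "(s,c) \<in> M3" "b = c \<or> (b,c) \<in> spref I s" using C by blast
    have "a = c \<or> (a,c) \<in> spref I s" using a(2) c(2) sp_trans[OF sS] by blast
    then show ?thesis using a(1) c(1) unfolding sprefers_def sindiff_def by blast
  qed
qed

lemma dom_antisym:
  assumes m1: "is_matching I M1" and m2: "is_matching I M2"
    and d1: "dominates I M1 M2" and d2: "dominates I M2 M1"
  shows "M1 = M2"
proof -
  have one: "(s,p) \<in> N2" if mA: "is_matching I N1" and mB: "is_matching I N2"
    and dA: "dominates I N1 N2" and dB: "dominates I N2 N1" and sp: "(s,p) \<in> N1" for N1 N2 s p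
  proof -
    have sS: "s \<in> students I" using acceptableD(1)[OF matchingD(1)[OF mA sp]] .
    have h1: "sprefers I s N1 N2 \<or> sindiff s N1 N2" using dA sS unfolding dominates_def by blast
    have h2: "sprefers I s N2 N1 \<or> sindiff s N2 N1" using dB sS unfolding dominates_def by blast
    note uA = matchingD(2)[OF mA] and uB = matchingD(2)[OF mB]
    show ?thesis
    proof (cases "sprefers I s N1 N2")
      case True
      then obtain a b where ab: "(s,a) \<in> N1" "(s,b) \<in> N2" "(a,b) \<in> spref I s" unfolding sprefers_def by blast
      from h2 show ?thesis
      proof
        assume "sprefers I s N2 N1"
        then obtain b' a' where "(s,b') \<in> N2" "(s,a') \<in> N1" "(b',a') \<in> spref I s" unfolding sprefers_def by blast
        then have "(b,a) \<in> spref I s" using ab uA uB by blast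
        then show ?thesis using ab(3) sp_asym[OF sS] by blast
      next
        assume "sindiff s N2 N1"
        then obtain c where "(s,c) \<in> N2" "(s,c) \<in> N1" using ab unfolding sindiff_def is_assigned_def by blast
        then show ?thesis using ab sp uA by blast
      qed
    next
      case False
      then have "sindiff s N1 N2" using h1 by blast
      then obtain c where "(s,c) \<in> N1" "(s,c) \<in> N2" using sp unfolding sindiff_def is_assigned_def by blast
      then show ?thesis using sp uA by blast
    qed
  qed
  show ?thesis
  proof (rule set_eqI, rule iffI)
    fix x assume "x \<in> M1" then show "x \<in> M2" using one[OF m1 m2 d1 d2] by (cases x) auto
  next
    fix x assume "x \<in> M2" then show "x \<in> M1" using one[OF m2 m1 d2 d1] by (cases x) auto
  qed
qed

lemma mn_mx:
  assumes sS: "s \<in> students I" and acc: "a \<in> acc I s" "b \<in> acc I s" "c \<in> acc I s"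
  shows "(let k = (if (b,c) \<in> spref I s then c else b) in (if (k,a) \<in> spref I s then k else a)) =
    (let x = (if (b,a) \<in> spref I s then b else a); y = (if (c,a) \<in> spref I s then c else a) in (if (x,y) \<in> spref I s then y else x))"
proof -
  note tr = sp_trans[OF sS] and as = sp_asym[OF sS] and ir = sp_irrefl[OF sS]
  have tab: "a = b \<or> (a,b) \<in> spref I s \<or> (b,a) \<in> spref I s" using sp_total[OF sS acc(1,2)] by blast
  have tac: "a = c \<or> (a,c) \<in> spref I s \<or> (c,a) \<in> spref I s" using sp_total[OF sS acc(1,3)] by blast
  have tbc: "b = c \<or> (b,c) \<in> spref I s \<or> (c,b) \<in> spref I s" using sp_total[OF sS acc(2,3)] by blast
  show ?thesis unfolding Let_def
    using tab tac tbc tr as ir by (smt (verit))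
qed

end

context two begin

lemma meet_fun: "(s,p) \<in> meet I M M' \<longleftrightarrow> (\<exists>a b. (s,a) \<in> M \<and> (s,b) \<in> M' \<and> p = (if (b,a) \<in> spref I s then b else a))"
proof
  assume h: "(s,p) \<in> meet I M M'"
  then obtain a where a: "(s,a) \<in> M" using meet_assigned unfolding is_assigned_def by blast
  then obtain b where b: "(s,b) \<in> M'" using R1 unfolding is_assigned_def by blast
  have sS: "s \<in> students I" using acceptableD(1)[OF accM[OF a]] .
  consider (i) "(s,p) \<in> M \<and> (s,p) \<in> M'" | (ii) "(s,p) \<in> M \<and> better_in I M M' s" | (iii) "(s,p) \<in> M' \<and> better_in I M' M s"
    using h unfolding meet_char by blast
  then show "\<exists>a b. (s,a) \<in> M \<and> (s,b) \<in> M' \<and> p = (if (b,a) \<in> spref I s then b else a)"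
  proof cases
    case i then show ?thesis using sp_irrefl[OF sS] by auto
  next
    case ii
    then obtain a0 b0 where h0: "(s,a0) \<in> M" "(s,b0) \<in> M'" "(a0,b0) \<in> spref I s" using bi_iff by blast
    have "a0 = p" using unM h0(1) ii by blast
    then have "(b0,p) \<notin> spref I s" using h0(3) sp_asym[OF sS] by blast
    then show ?thesis using ii h0(2) by auto
  next
    case iii
    then obtain b0 a0 where h0: "(s,b0) \<in> M'" "(s,a0) \<in> M" "(b0,a0) \<in> spref I s" using two.bi_iff[OF swp] by blast
    have "b0 = p" using unM' h0(1) iii by blast
    then show ?thesis using h0 by auto
  qed
next
  assume "\<exists>a b. (s,a) \<in> M \<and> (s,b) \<in> M' \<and> p = (if (b,a) \<in> spref I s then b else a)"
  then obtain a b where h: "(s,a) \<in> M" "(s,b) \<in> M'" "p = (if (b,a) \<in> spref I s then b else a)" by blast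
  have sS: "s \<in> students I" using acceptableD(1)[OF accM[OF h(1)]] .
  show "(s,p) \<in> meet I M M'"
  proof (cases "a = b")
    case True then show ?thesis using h sp_irrefl[OF sS] unfolding meet_char by auto
  next
    case False
    show ?thesis
    proof (cases "(b,a) \<in> spref I s")
      case True
      then have "better_in I M' M s" using h unfolding better_in_def is_assigned_def by blast
      then show ?thesis using h True unfolding meet_char by auto
    next
      case nba: False
      have "a \<in> acc I s" "b \<in> acc I s" using acceptableD(3) accM[OF h(1)] accM'[OF h(2)] by blast+
      then have "(a,b) \<in> spref I s" using sp_total[OF sS] False nba by blast
      then have "better_in I M M' s" using h unfolding better_in_def is_assigned_def by blast
      then show ?thesis using h nba unfolding meet_char by auto
    qed
  qed
qed

lemma join_fun: "(s,p) \<in> join I M M' \<longleftrightarrow> (\<exists>a b. (s,a) \<in> M \<and> (s,b) \<in> M' \<and> p = (if (a,b) \<in> spref I s then b else a))"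
proof
  assume h: "(s,p) \<in> join I M M'"
  then obtain a where a: "(s,a) \<in> M" using join_assigned unfolding is_assigned_def by blast
  then obtain b where b: "(s,b) \<in> M'" using R1 unfolding is_assigned_def by blast
  have sS: "s \<in> students I" using acceptableD(1)[OF accM[OF a]] .
  consider (i) "(s,p) \<in> M \<and> (s,p) \<in> M'" | (ii) "(s,p) \<in> M \<and> better_in I M' M s" | (iii) "(s,p) \<in> M' \<and> better_in I M M' s"
    using h unfolding join_char by blast
  then show "\<exists>a b. (s,a) \<in> M \<and> (s,b) \<in> M' \<and> p = (if (a,b) \<in> spref I s then b else a)"
  proof cases
    case i then show ?thesis using sp_irrefl[OF sS] by auto
  next
    case ii
    then obtain b0 a0 where h0: "(s,b0) \<in> M'" "(s,a0) \<in> M" "(b0,a0) \<in> spref I s" using two.bi_iff[OF swp] by blast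
    have "a0 = p" using unM h0(2) ii by blast
    then have "(p,b0) \<notin> spref I s" using h0(3) sp_asym[OF sS] by blast
    then show ?thesis using ii h0(1) by auto
  next
    case iii
    then obtain a0 b0 where h0: "(s,a0) \<in> M" "(s,b0) \<in> M'" "(a0,b0) \<in> spref I s" using bi_iff by blast
    have "b0 = p" using unM' h0(2) iii by blast
    then show ?thesis using h0 by auto
  qed
next
  assume "\<exists>a b. (s,a) \<in> M \<and> (s,b) \<in> M' \<and> p = (if (a,b) \<in> spref I s then b else a)"
  then obtain a b where h: "(s,a) \<in> M" "(s,b) \<in> M'" "p = (if (a,b) \<in> spref I s then b else a)" by blast
  have sS: "s \<in> students I" using acceptableD(1)[OF accM[OF h(1)]] .
  show "(s,p) \<in> join I M M'"
  proof (cases "a = b")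
    case True then show ?thesis using h sp_irrefl[OF sS] unfolding join_char by auto
  next
    case False
    show ?thesis
    proof (cases "(a,b) \<in> spref I s")
      case True
      then have "better_in I M M' s" using h unfolding better_in_def is_assigned_def by blast
      then show ?thesis using h True unfolding join_char by auto
    next
      case nab: False
      have "a \<in> acc I s" "b \<in> acc I s" using acceptableD(3) accM[OF h(1)] accM'[OF h(2)] by blast+
      then have "(b,a) \<in> spref I s" using sp_total[OF sS] False nab by blast
      then have "better_in I M' M s" using h unfolding better_in_def is_assigned_def by blast
      then show ?thesis using h nab unfolding join_char by auto
    qed
  qed
qed

lemma meet_dom1: "dominates I (meet I M M') M"
  unfolding dominates_def
proof
  fix s assume sS: "s \<in> students I"
  show "sprefers I s (meet I M M') M \<or> sindiff s (meet I M M') M"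
  proof (cases "is_assigned M s")
    case False
    then show ?thesis using meet_assigned unfolding sindiff_def by blast
  next
    case True
    then obtain a where a: "(s,a) \<in> M" unfolding is_assigned_def by blast
    obtain b where b: "(s,b) \<in> M'" using R1[OF True] unfolding is_assigned_def by blast
    have "(s, if (b,a) \<in> spref I s then b else a) \<in> meet I M M'" using meet_fun a b by blast
    then show ?thesis using a b unfolding sprefers_def sindiff_def by (cases "(b,a) \<in> spref I s") auto
  qed
qed

lemma meet_dom2: "dominates I (meet I M M') M'"
  using two.meet_dom1[OF swp] meet_sym[of I M M'] by simp

lemma join_dom1: "dominates I M (join I M M')"
  unfolding dominates_def
proof
  fix s assume sS: "s \<in> students I"
  show "sprefers I s M (join I M M') \<or> sindiff s M (join I M M')"
  proof (cases "is_assigned M s")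
    case False
    then show ?thesis using join_assigned unfolding sindiff_def by blast
  next
    case True
    then obtain a where a: "(s,a) \<in> M" unfolding is_assigned_def by blast
    obtain b where b: "(s,b) \<in> M'" using R1[OF True] unfolding is_assigned_def by blast
    have "(s, if (a,b) \<in> spref I s then b else a) \<in> join I M M'" using join_fun a b by blast
    then show ?thesis using a b unfolding sprefers_def sindiff_def by (cases "(a,b) \<in> spref I s") auto
  qed
qed

lemma join_dom2: "dominates I M' (join I M M')"
  using two.join_dom1[OF swp] join_sym[of I M M'] by simp

lemma meet_glb:
  assumes mN: "is_matching I N" and d1: "dominates I N M" and d2: "dominates I N M'"
  shows "dominates I N (meet I M M')"
  unfolding dominates_def
proof
  fix s assume sS: "s \<in> students I"
  have h1: "sprefers I s N M \<or> sindiff s N M" using d1 sS unfolding dominates_def by blast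
  have h2: "sprefers I s N M' \<or> sindiff s N M'" using d2 sS unfolding dominates_def by blast
  note uN = matchingD(2)[OF mN]
  show "sprefers I s N (meet I M M') \<or> sindiff s N (meet I M M')"
  proof (cases "is_assigned M s")
    case False
    then have "\<not> sprefers I s N M" unfolding sprefers_def is_assigned_def by blast
    then have "sindiff s N M" using h1 by blast
    then have "\<not> is_assigned N s" using False unfolding sindiff_def is_assigned_def by blast
    moreover have "\<not> is_assigned (meet I M M') s" using False meet_assigned by blast
    ultimately show ?thesis unfolding sindiff_def by blast
  next
    case True
    then obtain a where a: "(s,a) \<in> M" unfolding is_assigned_def by blast
    obtain b where b: "(s,b) \<in> M'" using R1[OF True] unfolding is_assigned_def by blast
    have n1: "\<exists>n. (s,n) \<in> N \<and> (n = a \<or> (n,a) \<in> spref I s)"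
      using h1 a unM unfolding sprefers_def sindiff_def is_assigned_def by blast
    have n2: "\<exists>n. (s,n) \<in> N \<and> (n = b \<or> (n,b) \<in> spref I s)"
      using h2 b unM' unfolding sprefers_def sindiff_def is_assigned_def by blast
    obtain n where n: "(s,n) \<in> N" "n = a \<or> (n,a) \<in> spref I s" using n1 by blast
    have nb: "n = b \<or> (n,b) \<in> spref I s" using n2 n(1) uN by blast
    define m where "m = (if (b,a) \<in> spref I s then b else a)"
    have m: "(s,m) \<in> meet I M M'" using meet_fun a b m_def by blast
    have "n = m \<or> (n,m) \<in> spref I s" using n(2) nb unfolding m_def by auto
    then show ?thesis using n(1) m unfolding sprefers_def sindiff_def by blast
  qed
qed

lemma join_lub:
  assumes mN: "is_matching I N" and d1: "dominates I M N" and d2: "dominates I M' N"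
  shows "dominates I (join I M M') N"
  unfolding dominates_def
proof
  fix s assume sS: "s \<in> students I"
  have h1: "sprefers I s M N \<or> sindiff s M N" using d1 sS unfolding dominates_def by blast
  have h2: "sprefers I s M' N \<or> sindiff s M' N" using d2 sS unfolding dominates_def by blast
  note uN = matchingD(2)[OF mN]
  show "sprefers I s (join I M M') N \<or> sindiff s (join I M M') N"
  proof (cases "is_assigned M s")
    case False
    then have "\<not> sprefers I s M N" unfolding sprefers_def is_assigned_def by blast
    then have "sindiff s M N" using h1 by blast
    then have "\<not> is_assigned N s" using False unfolding sindiff_def is_assigned_def by blast
    moreover have "\<not> is_assigned (join I M M') s" using False join_assigned by blast
    ultimately show ?thesis unfolding sindiff_def by blast
  next
    case True
    then obtain a where a: "(s,a) \<in> M" unfolding is_assigned_def by blast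
    obtain b where b: "(s,b) \<in> M'" using R1[OF True] unfolding is_assigned_def by blast
    have n1: "\<exists>n. (s,n) \<in> N \<and> (n = a \<or> (a,n) \<in> spref I s)"
      using h1 a unM unfolding sprefers_def sindiff_def is_assigned_def by blast
    have n2: "\<exists>n. (s,n) \<in> N \<and> (n = b \<or> (b,n) \<in> spref I s)"
      using h2 b unM' unfolding sprefers_def sindiff_def is_assigned_def by blast
    obtain n where n: "(s,n) \<in> N" "n = a \<or> (a,n) \<in> spref I s" using n1 by blast
    have nb: "n = b \<or> (b,n) \<in> spref I s" using n2 n(1) uN by blast
    define m where "m = (if (a,b) \<in> spref I s then b else a)"
    have m: "(s,m) \<in> join I M M'" using join_fun a b m_def by blast
    have "m = n \<or> (m,n) \<in> spref I s" using n(2) nb unfolding m_def by auto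
    then show ?thesis using n(1) m unfolding sprefers_def sindiff_def by blast
  qed
qed

end

lemma distrib:
  assumes inst: "spa_instance I" and s1: "stable I M" and s2: "stable I M'" and s3: "stable I M''"
  shows "meet I M (join I M' M'') = join I (meet I M M') (meet I M M'')"
proof -
  have tw: "two I A B" if "stable I A" "stable I B" for A B
    using that inst unfolding two_def two_axioms_def spa_loc_def by blast
  have t1: "two I M' M''" using tw s2 s3 by blast
  have t2: "two I M (join I M' M'')" using tw s1 two.join_stable[OF t1] by blast
  have t3: "two I M M'" using tw s1 s2 by blast
  have t4: "two I M M''" using tw s1 s3 by blast
  have t5: "two I (meet I M M') (meet I M M'')" using tw two.meet_stable[OF t3] two.meet_stable[OF t4] by blast
  interpret S: spa_loc I using inst unfolding spa_loc_def .
  have mM: "is_matching I M" using s1 unfolding stable_def by blast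
  have key: "(s,p) \<in> meet I M (join I M' M'') \<longleftrightarrow> (s,p) \<in> join I (meet I M M') (meet I M M'')" for s p
    proof
      assume "(s,p) \<in> meet I M (join I M' M'')"
      then obtain a k where ak: "(s,a) \<in> M" "(s,k) \<in> join I M' M''" "p = (if (k,a) \<in> spref I s then k else a)"
        using two.meet_fun[OF t2] by blast
      then obtain b c where bc: "(s,b) \<in> M'" "(s,c) \<in> M''" "k = (if (b,c) \<in> spref I s then c else b)"
        using two.join_fun[OF t1] by blast
      define x1 where "x1 = (if (b,a) \<in> spref I s then b else a)"
      define y1 where "y1 = (if (c,a) \<in> spref I s then c else a)"
      have x1: "(s,x1) \<in> meet I M M'" using two.meet_fun[OF t3] ak(1) bc(1) x1_def by blast
      have y1: "(s,y1) \<in> meet I M M''" using two.meet_fun[OF t4] ak(1) bc(2) y1_def by blast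
      have sS: "s \<in> students I" using S.acceptableD(1)[OF S.matchingD(1)[OF mM ak(1)]] .
      have acc: "a \<in> acc I s" "b \<in> acc I s" "c \<in> acc I s"
        using S.acceptableD(3) S.matchingD(1) ak(1) bc(1,2) mM s2 s3 unfolding stable_def by blast+
      have e: "(if (k,a) \<in> spref I s then k else a) = (if (x1,y1) \<in> spref I s then y1 else x1)"
        using S.mn_mx[OF sS acc] unfolding Let_def x1_def y1_def bc(3) .
      have "p = (if (x1,y1) \<in> spref I s then y1 else x1)"
        using ak(3) e by (rule trans)
      then show "(s,p) \<in> join I (meet I M M') (meet I M M'')" using two.join_fun[OF t5] x1 y1 by blast
    next
      assume "(s,p) \<in> join I (meet I M M') (meet I M M'')"
      then obtain x1 y1 where xy: "(s,x1) \<in> meet I M M'" "(s,y1) \<in> meet I M M''" "p = (if (x1,y1) \<in> spref I s then y1 else x1)"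
        using two.join_fun[OF t5] by blast
      obtain a b where ab: "(s,a) \<in> M" "(s,b) \<in> M'" "x1 = (if (b,a) \<in> spref I s then b else a)"
        using two.meet_fun[OF t3] xy(1) by blast
      obtain a' c where ac: "(s,a') \<in> M" "(s,c) \<in> M''" "y1 = (if (c,a') \<in> spref I s then c else a')"
        using two.meet_fun[OF t4] xy(2) by blast
      have "a' = a" using S.matchingD(2)[OF mM] ab(1) ac(1) by blast
      define k where "k = (if (b,c) \<in> spref I s then c else b)"
      have k: "(s,k) \<in> join I M' M''" using two.join_fun[OF t1] ab(2) ac(2) k_def by blast
      have sS: "s \<in> students I" using S.acceptableD(1)[OF S.matchingD(1)[OF mM ab(1)]] .
      have acc: "a \<in> acc I s" "b \<in> acc I s" "c \<in> acc I s"
        using S.acceptableD(3) S.matchingD(1) ab(1,2) ac(2) mM s2 s3 unfolding stable_def by blast+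
      have e: "(if (k,a) \<in> spref I s then k else a) = (if (x1,y1) \<in> spref I s then y1 else x1)"
        using S.mn_mx[OF sS acc] unfolding Let_def k_def ab(3) ac(3) \<open>a' = a\<close> .
      have "p = (if (k,a) \<in> spref I s then k else a)"
        using xy(3) e[symmetric] by (rule trans)
      then show "(s,p) \<in> meet I M (join I M' M'')" using two.meet_fun[OF t2] ab(1) k by blast
    qed
  show ?thesis by (intro subset_antisym subrelI) (simp_all add: key)
qed

theorem theorem2:
  fixes I :: "('s,'p,'l) spa"
  assumes "spa_instance I"
  defines "SM \<equiv> {M. stable I M}"
  shows
    \<comment> \<open>dominance is a partial order on the stable matchings\<close>
    "(\<forall>M\<in>SM. dominates I M M) \<and>
     (\<forall>M\<in>SM. \<forall>M'\<in>SM. \<forall>M''\<in>SM. dominates I M M' \<longrightarrow> dominates I M' M'' \<longrightarrow> dominates I M M'') \<and>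
     (\<forall>M\<in>SM. \<forall>M'\<in>SM. dominates I M M' \<longrightarrow> dominates I M' M \<longrightarrow> M = M') \<and>
     \<comment> \<open>meet is the greatest lower bound, join the least upper bound, both stable\<close>
     (\<forall>M\<in>SM. \<forall>M'\<in>SM. meet I M M' \<in> SM \<and> dominates I (meet I M M') M \<and>
        dominates I (meet I M M') M' \<and>
        (\<forall>N\<in>SM. dominates I N M \<longrightarrow> dominates I N M' \<longrightarrow> dominates I N (meet I M M'))) \<and>
     (\<forall>M\<in>SM. \<forall>M'\<in>SM. join I M M' \<in> SM \<and> dominates I M (join I M M') \<and>
        dominates I M' (join I M M') \<and>
        (\<forall>N\<in>SM. dominates I M N \<longrightarrow> dominates I M' N \<longrightarrow> dominates I (join I M M') N)) \<and>
     \<comment> \<open>distributivity\<close>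
     (\<forall>M\<in>SM. \<forall>M'\<in>SM. \<forall>M''\<in>SM.
        meet I M (join I M' M'') = join I (meet I M M') (meet I M M''))"
proof -
  interpret S: spa_loc I using assms(1) unfolding spa_loc_def .
  have tw: "two I A B" if "A \<in> SM" "B \<in> SM" for A B
    using that assms(1) unfolding SM_def two_def two_axioms_def spa_loc_def by blast
  have mt: "is_matching I A" if "A \<in> SM" for A
    using that unfolding SM_def stable_def by blast
  have c1: "\<forall>M\<in>SM. dominates I M M" using S.dom_refl mt by blast
  have c2: "\<forall>M\<in>SM. \<forall>M'\<in>SM. \<forall>M''\<in>SM. dominates I M M' \<longrightarrow> dominates I M' M'' \<longrightarrow> dominates I M M''"
  proof (intro ballI impI)
    fix M M' M'' assume "M \<in> SM" "M' \<in> SM" "M'' \<in> SM" "dominates I M M'" "dominates I M' M''"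
    then show "dominates I M M''" using S.dom_trans[OF mt mt mt] by blast
  qed
  have c3: "\<forall>M\<in>SM. \<forall>M'\<in>SM. dominates I M M' \<longrightarrow> dominates I M' M \<longrightarrow> M = M'"
  proof (intro ballI impI)
    fix M M' assume "M \<in> SM" "M' \<in> SM" "dominates I M M'" "dominates I M' M"
    then show "M = M'" using S.dom_antisym[OF mt mt] by blast
  qed
  have c4: "\<forall>M\<in>SM. \<forall>M'\<in>SM. meet I M M' \<in> SM \<and> dominates I (meet I M M') M \<and>
        dominates I (meet I M M') M' \<and>
        (\<forall>N\<in>SM. dominates I N M \<longrightarrow> dominates I N M' \<longrightarrow> dominates I N (meet I M M'))"
  proof (intro ballI conjI impI)
    fix M M' assume a: "M \<in> SM" "M' \<in> SM"
    show "meet I M M' \<in> SM" using two.meet_stable[OF tw[OF a]] unfolding SM_def by blast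
    show "dominates I (meet I M M') M" using two.meet_dom1[OF tw[OF a]] .
    show "dominates I (meet I M M') M'" using two.meet_dom2[OF tw[OF a]] .
    fix N assume "N \<in> SM" "dominates I N M" "dominates I N M'"
    then show "dominates I N (meet I M M')" using two.meet_glb[OF tw[OF a] mt] by blast
  qed
  have c5: "\<forall>M\<in>SM. \<forall>M'\<in>SM. join I M M' \<in> SM \<and> dominates I M (join I M M') \<and>
        dominates I M' (join I M M') \<and>
        (\<forall>N\<in>SM. dominates I M N \<longrightarrow> dominates I M' N \<longrightarrow> dominates I (join I M M') N)"
  proof (intro ballI conjI impI)
    fix M M' assume a: "M \<in> SM" "M' \<in> SM"
    show "join I M M' \<in> SM" using two.join_stable[OF tw[OF a]] unfolding SM_def by blast
    show "dominates I M (join I M M')" using two.join_dom1[OF tw[OF a]] .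
    show "dominates I M' (join I M M')" using two.join_dom2[OF tw[OF a]] .
    fix N assume "N \<in> SM" "dominates I M N" "dominates I M' N"
    then show "dominates I (join I M M') N" using two.join_lub[OF tw[OF a] mt] by blast
  qed
  have c6: "\<forall>M\<in>SM. \<forall>M'\<in>SM. \<forall>M''\<in>SM.
        meet I M (join I M' M'') = join I (meet I M M') (meet I M M'')"
    using distrib[OF assms(1)] unfolding SM_def by blast
  show ?thesis by (intro conjI c1 c2 c3 c4 c5 c6)
qed

end
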